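(* Let $k$ be an unramified non-archimedean local field of residue characteristic $2$ (so $e=1$ and we take $\varpi=2$). Let $B(x)=x_1^2-a(x_2^2-\Delta x_3^2)$ on $k^3$, where $a=1+2u$ and $\Delta$ are units with quadratic defect $2\mathfrak o$, the Hilbert symbol $(a,\Delta)=-1$, $-a\Delta=1+2v$, and $u,v$ are units. Let $z=q^{-\beta}$, $w=zq^{-1}$, and $t\in\mathfrak o\setminus\{0\}$ with $|t|=q^{-T}$. Then \[ X^B(\beta;t^2)=|2|\,\frac{1+wq^{-1}}{1-w^2q^{-1}}+|2|\,w^{2T+1}q^{-T}\,\frac{1-w^2q^{-2}}{(1-w)(1-w^2q^{-1})}. \]
   Context: $k$ has ring of integers $\mathfrak o$, residue field of cardinality $q$, absolute value normalized by $|2|=q^{-1}$. On $\mathfrak o^n$ use the additive Haar measure of total mass $1$. For a quadratic form $B$ on $k^n$, $\rho\in\mathfrak o$ and integer $\ell\ge0$: $X_\ell^B(\rho)=\operatorname{meas}\{x\in\mathfrak o^n: B(x)-\rho\in 2^{\ell+1}\mathfrak o\}$ and $X^B(\beta;\rho)=\sum_{\ell\ge0}z^\ell X_\ell^B(\rho)$ with $z=q^{-\beta}$. The quadratic defect of $\rho\in k$ is the intersection of all ideals $b\mathfrak o$ over those $b\in k$ for which $\rho-b$ is a square in $k$. $(\cdot,\cdot)$ is the Hilbert symbol of $k$. *)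

theory Defs
  imports "HOL-Analysis.Analysis"
begin

text \<open>A non-archimedean field k is given by a type 'k of class field together with a
  discrete valuation val :: 'k => int (the value at 0 is irrelevant / unused).\<close>

definition vring :: "('k::field \<Rightarrow> int) \<Rightarrow> 'k set" where
  "vring val = {x. x = 0 \<or> 0 \<le> val x}"

definition two_pow_ideal :: "('k::field \<Rightarrow> int) \<Rightarrow> nat \<Rightarrow> 'k set" where
  "two_pow_ideal val m = {(2::'k) ^ m * y | y. y \<in> vring val}"

definition is_unit_v :: "('k::field \<Rightarrow> int) \<Rightarrow> 'k \<Rightarrow> bool" where
  "is_unit_v val x \<longleftrightarrow> x \<noteq> 0 \<and> val x = 0"

text \<open>Unramified non-archimedean local field of residue characteristic 2, with
  uniformizer 2 and residue field of cardinality q: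
  val is a discrete valuation, val 2 = 1, k is complete, and o/2o is finite of cardinality q.\<close>
definition unram_dyadic_local_field :: "('k::field \<Rightarrow> int) \<Rightarrow> nat \<Rightarrow> bool" where
  "unram_dyadic_local_field val q \<longleftrightarrow>
     (\<forall>x y. x \<noteq> 0 \<longrightarrow> y \<noteq> 0 \<longrightarrow> val (x * y) = val x + val y) \<and>
     (\<forall>x y. x \<noteq> 0 \<longrightarrow> y \<noteq> 0 \<longrightarrow> x + y \<noteq> 0 \<longrightarrow> min (val x) (val y) \<le> val (x + y)) \<and>
     (2::'k) \<noteq> 0 \<and> val 2 = 1 \<and>
     (\<forall>s::nat \<Rightarrow> 'k.
        (\<forall>N::int. \<exists>M. \<forall>m\<ge>M. \<forall>n\<ge>M. s m = s n \<or> N \<le> val (s m - s n)) \<longrightarrow>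
        (\<exists>L. \<forall>N::int. \<exists>M. \<forall>n\<ge>M. s n = L \<or> N \<le> val (s n - L))) \<and>
     finite (vring val // {(x, y). x \<in> vring val \<and> y \<in> vring val \<and> x - y \<in> two_pow_ideal val 1}) \<and>
     card (vring val // {(x, y). x \<in> vring val \<and> y \<in> vring val \<and> x - y \<in> two_pow_ideal val 1}) = q"

text \<open>o^n, with vectors as functions nat => 'k vanishing outside {0..<n}.\<close>
definition vecs :: "('k::field \<Rightarrow> int) \<Rightarrow> nat \<Rightarrow> (nat \<Rightarrow> 'k) set" where
  "vecs val n = {x. (\<forall>i<n. x i \<in> vring val) \<and> (\<forall>i\<ge>n. x i = 0)}"

definition vec_cong :: "('k::field \<Rightarrow> int) \<Rightarrow> nat \<Rightarrow> nat \<Rightarrow> ((nat \<Rightarrow> 'k) \<times> (nat \<Rightarrow> 'k)) set" where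
  "vec_cong val n m = {(x, y). x \<in> vecs val n \<and> y \<in> vecs val n \<and>
                          (\<forall>i<n. x i - y i \<in> two_pow_ideal val m)}"

text \<open>Haar measure (total mass 1 on o^n) of a set S \<subseteq> o^n which is a union of cosets
  of 2^m o^n: number of cosets in S divided by the number of cosets in o^n.\<close>
definition coset_measure :: "('k::field \<Rightarrow> int) \<Rightarrow> nat \<Rightarrow> nat \<Rightarrow> (nat \<Rightarrow> 'k) set \<Rightarrow> real" where
  "coset_measure val n m S = real (card (S // vec_cong val n m)) / real (card (vecs val n // vec_cong val n m))"

text \<open>X_l^B(rho) = meas {x in o^n : B(x) - rho in 2^(l+1) o}  (for B with integral
  coefficients this set is a union of cosets of 2^(l+1) o^n).\<close>
definition X_l :: "('k::field \<Rightarrow> int) \<Rightarrow> nat \<Rightarrow> ((nat \<Rightarrow> 'k) \<Rightarrow> 'k) \<Rightarrow> 'k \<Rightarrow> nat \<Rightarrow> real" where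
  "X_l val n B \<rho> l = coset_measure val n (l + 1)
      {x \<in> vecs val n. B x - \<rho> \<in> two_pow_ideal val (l + 1)}"

definition quad_defect :: "('k::field \<Rightarrow> int) \<Rightarrow> 'k \<Rightarrow> 'k set" where
  "quad_defect val \<rho> = (\<Inter>b \<in> {b. \<exists>c. \<rho> - b = c ^ 2}. {b * y | y. y \<in> vring val})"

definition hilbert_symbol :: "'k::field \<Rightarrow> 'k \<Rightarrow> int" where
  "hilbert_symbol a b = (if \<exists>x y z. (x, y, z) \<noteq> (0, 0, 0) \<and> z ^ 2 = a * x ^ 2 + b * y ^ 2
                          then 1 else -1)"

end

theory Submission
  imports Defs
begin

locale dyad =
  fixes val :: "'k::field \<Rightarrow> int" and q :: nat
  assumes LF: "unram_dyadic_local_field val q"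
begin

abbreviation "Oo \<equiv> vring val"
abbreviation "Ii \<equiv> two_pow_ideal val"

lemma LFD: "(\<forall>x y. x \<noteq> 0 \<longrightarrow> y \<noteq> 0 \<longrightarrow> val (x * y) = val x + val y) \<and>
     (\<forall>x y. x \<noteq> 0 \<longrightarrow> y \<noteq> 0 \<longrightarrow> x + y \<noteq> 0 \<longrightarrow> min (val x) (val y) \<le> val (x + y)) \<and>
     (2::'k) \<noteq> 0 \<and> val 2 = 1 \<and>
     (\<forall>s::nat \<Rightarrow> 'k.
        (\<forall>N::int. \<exists>M. \<forall>m\<ge>M. \<forall>n\<ge>M. s m = s n \<or> N \<le> val (s m - s n)) \<longrightarrow>
        (\<exists>L. \<forall>N::int. \<exists>M. \<forall>n\<ge>M. s n = L \<or> N \<le> val (s n - L))) \<and>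
     finite (Oo // {(x, y). x \<in> Oo \<and> y \<in> Oo \<and> x - y \<in> Ii 1}) \<and>
     card (Oo // {(x, y). x \<in> Oo \<and> y \<in> Oo \<and> x - y \<in> Ii 1}) = q"
  using LF unfolding unram_dyadic_local_field_def .

lemma vmult: "x \<noteq> 0 \<Longrightarrow> y \<noteq> 0 \<Longrightarrow> val (x*y) = val x + val y"
  using LFD[THEN conjunct1] by blast
lemma vultra: "x\<noteq>0 \<Longrightarrow> y\<noteq>0 \<Longrightarrow> x+y\<noteq>0 \<Longrightarrow> min (val x) (val y) \<le> val (x+y)"
  using LFD[THEN conjunct2, THEN conjunct1] by blast
lemma two_nz: "(2::'k) \<noteq> 0"
  using LFD[THEN conjunct2, THEN conjunct2, THEN conjunct1] .
lemma v2: "val 2 = 1"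
  using LFD[THEN conjunct2, THEN conjunct2, THEN conjunct2, THEN conjunct1] .
lemma complete: fixes s :: "nat \<Rightarrow> 'k" shows "(\<forall>N::int. \<exists>M. \<forall>m\<ge>M. \<forall>n\<ge>M. s m = s n \<or> N \<le> val (s m - s n)) \<Longrightarrow>
        (\<exists>L. \<forall>N::int. \<exists>M. \<forall>n\<ge>M. s n = L \<or> N \<le> val (s n - L))"
  by (rule LFD[THEN conjunct2, THEN conjunct2, THEN conjunct2, THEN conjunct2, THEN conjunct1, THEN spec, THEN mp]) assumption
lemma resfin: "finite (Oo // {(x, y). x \<in> Oo \<and> y \<in> Oo \<and> x - y \<in> Ii 1})"
  using LFD[THEN conjunct2, THEN conjunct2, THEN conjunct2, THEN conjunct2, THEN conjunct2, THEN conjunct1] .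
lemma rescard: "card (Oo // {(x, y). x \<in> Oo \<and> y \<in> Oo \<and> x - y \<in> Ii 1}) = q"
  using LFD[THEN conjunct2, THEN conjunct2, THEN conjunct2, THEN conjunct2, THEN conjunct2, THEN conjunct2] .

lemma v1: "val 1 = 0"
  using vmult[of 1 1] by simp
lemma vm1: "val (-1) = 0"
  using vmult[of "-1" "-1"] v1 by simp
lemma vneg: "val (-x) = val x"
proof (cases "x = 0")
  case False
  then show ?thesis using vmult[of "-1" x] vm1 by simp
qed simp
lemma vpow: "x \<noteq> 0 \<Longrightarrow> val (x^n) = int n * val x"
  by (induction n) (auto simp: vmult v1 algebra_simps)
lemma v2pow: "val ((2::'k)^n) = int n"
  using vpow[OF two_nz] v2 by simp
lemma vinv: "x \<noteq> 0 \<Longrightarrow> val (inverse x) = - val x"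
  using vmult[of x "inverse x"] v1 by simp
lemma vdiv: "x \<noteq> 0 \<Longrightarrow> y \<noteq> 0 \<Longrightarrow> val (x/y) = val x - val y"
  by (simp add: divide_inverse vmult vinv)

lemma memO: "x \<in> Oo \<longleftrightarrow> x = 0 \<or> 0 \<le> val x"
  by (simp add: vring_def)

lemma memI: "x \<in> Ii m \<longleftrightarrow> x = 0 \<or> int m \<le> val x"
proof
  assume "x \<in> Ii m"
  then obtain y where y: "x = 2^m * y" "y \<in> Oo" unfolding two_pow_ideal_def by auto
  show "x = 0 \<or> int m \<le> val x"
  proof (cases "y = 0")
    case False
    then have "val x = int m + val y" using y two_nz by (simp add: vmult v2pow)
    then show ?thesis using y False by (auto simp: memO)
  qed (simp add: y)
next
  assume h: "x = 0 \<or> int m \<le> val x"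
  show "x \<in> Ii m"
  proof (cases "x = 0")
    case True
    then show ?thesis unfolding two_pow_ideal_def by (auto simp: memO intro!: exI[of _ 0])
  next
    case False
    define y where "y = x / 2^m"
    have "x = 2^m * y" using two_nz by (simp add: y_def)
    moreover have "y \<in> Oo" using False h two_nz by (simp add: y_def memO vdiv v2pow)
    ultimately show ?thesis unfolding two_pow_ideal_def by auto
  qed
qed

lemma O_I0: "x \<in> Oo \<longleftrightarrow> x \<in> Ii 0"
  by (simp add: memO memI)

lemma I_0[simp]: "0 \<in> Ii m" by (simp add: memI)

lemma I_add[simp, intro]: "x \<in> Ii m \<Longrightarrow> y \<in> Ii m \<Longrightarrow> x + y \<in> Ii m"
proof -
  assume a: "x \<in> Ii m" "y \<in> Ii m"
  show ?thesis
  proof (cases "x = 0 \<or> y = 0 \<or> x + y = 0")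
    case True then show ?thesis using a by auto
  next
    case False
    then have "min (val x) (val y) \<le> val (x+y)" using vultra by blast
    then show ?thesis using a False by (auto simp: memI)
  qed
qed

lemma I_neg[simp]: "- x \<in> Ii m \<longleftrightarrow> x \<in> Ii m"
  by (simp add: memI vneg)

lemma I_diff[simp, intro]: "x \<in> Ii m \<Longrightarrow> y \<in> Ii m \<Longrightarrow> x - y \<in> Ii m"
  using I_add[of x m "-y"] by simp

lemma I_mult[intro]: "x \<in> Ii m \<Longrightarrow> y \<in> Ii n \<Longrightarrow> x * y \<in> Ii (m+n)"
  by (cases "x=0"; cases "y=0") (auto simp: memI vmult)

lemma I_mono: "n \<le> m \<Longrightarrow> x \<in> Ii m \<Longrightarrow> x \<in> Ii n"
  by (auto simp: memI)

lemma I_mult_O[simp, intro]: "x \<in> Ii m \<Longrightarrow> y \<in> Oo \<Longrightarrow> x * y \<in> Ii m"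
  using I_mult[of x m y 0] by (simp add: O_I0)
lemma O_mult_I[simp, intro]: "y \<in> Oo \<Longrightarrow> x \<in> Ii m \<Longrightarrow> y * x \<in> Ii m"
  using I_mult_O[of x m y] by (simp add: mult.commute)

lemma O_add[simp, intro]: "x \<in> Oo \<Longrightarrow> y \<in> Oo \<Longrightarrow> x + y \<in> Oo"
  using I_add[of x 0 y] by (simp add: O_I0)
lemma O_diff[simp, intro]: "x \<in> Oo \<Longrightarrow> y \<in> Oo \<Longrightarrow> x - y \<in> Oo"
  using I_diff[of x 0 y] by (simp add: O_I0)
lemma O_neg[simp]: "- x \<in> Oo \<longleftrightarrow> x \<in> Oo"
  using I_neg[of x 0] by (simp add: O_I0)
lemma O_mult[simp, intro]: "x \<in> Oo \<Longrightarrow> y \<in> Oo \<Longrightarrow> x * y \<in> Oo"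
  using I_mult[of x 0 y 0] by (simp add: O_I0)
lemma O_0[simp]: "0 \<in> Oo" by (simp add: memO)
lemma O_1[simp]: "1 \<in> Oo" by (simp add: memO v1)
lemma O_pow[simp, intro]: "x \<in> Oo \<Longrightarrow> x ^ n \<in> Oo"
  by (induction n) auto
lemma O_of_nat[simp]: "of_nat n \<in> Oo"
  by (induction n) auto
lemma O_numeral[simp]: "numeral n \<in> Oo"
  using O_of_nat[of "numeral n"] by simp
lemma I_sub_O: "x \<in> Ii m \<Longrightarrow> x \<in> Oo"
  using I_mono[of 0 m x] by (simp add: O_I0)

lemma pow2_I[simp, intro]: "y \<in> Oo \<Longrightarrow> 2^m * y \<in> Ii m"
  unfolding two_pow_ideal_def by auto
lemma two_I: "y \<in> Oo \<Longrightarrow> 2 * y \<in> Ii 1"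
  using pow2_I[of y 1] by simp
lemma four_I: "y \<in> Oo \<Longrightarrow> 4 * y \<in> Ii 2"
  using pow2_I[of y 2] by simp
lemma eight_I: "y \<in> Oo \<Longrightarrow> 8 * y \<in> Ii 3"
  using pow2_I[of y 3] by simp
lemma two_I1[simp]: "2 \<in> Ii 1" using two_I[of 1] by simp

lemma pow2_mult_I: "(2::'k)^j * y \<in> Ii (j + k) \<longleftrightarrow> y \<in> Ii k"
  using two_nz by (cases "y=0") (auto simp: memI vmult v2pow)

lemma one_notin_I1[simp]: "(1::'k) \<notin> Ii 1"
  by (simp add: memI v1)
lemma one_notin_I1'[simp]: "(1::'k) \<notin> Ii (Suc 0)"
  by (simp add: memI v1)

lemma I_sq: "x * x \<in> Ii 1 \<Longrightarrow> x \<in> Ii 1"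
  by (cases "x=0") (auto simp: memI vmult)

definition unit :: "'k \<Rightarrow> bool" where "unit x \<longleftrightarrow> x \<in> Oo \<and> x \<notin> Ii 1"

lemma unit_val: "unit x \<longleftrightarrow> x \<noteq> 0 \<and> val x = 0"
  by (auto simp: unit_def memO memI)

lemma unit_nz: "unit x \<Longrightarrow> x \<noteq> 0" by (simp add: unit_val)
lemma unit_O: "unit x \<Longrightarrow> x \<in> Oo" by (simp add: unit_def)

lemma unit_inv: "unit x \<Longrightarrow> unit (inverse x)"
  by (simp add: unit_val vinv)
lemma unit_mult: "unit x \<Longrightarrow> unit y \<Longrightarrow> unit (x*y)"
  by (simp add: unit_val vmult)
lemma unit_1[simp]: "unit 1" by (simp add: unit_val v1)

lemma unit_mult_I: "unit x \<Longrightarrow> x * y \<in> Ii m \<longleftrightarrow> y \<in> Ii m"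
  by (cases "y=0") (auto simp: unit_val memI vmult)

lemma unit_div_O: "unit x \<Longrightarrow> y \<in> Oo \<Longrightarrow> y / x \<in> Oo"
  using unit_inv[of x] by (simp add: divide_inverse unit_def)

lemma unit_cong: "unit x \<Longrightarrow> y \<in> Oo \<Longrightarrow> y - x \<in> Ii 1 \<Longrightarrow> unit y"
proof -
  assume a: "unit x" "y \<in> Oo" "y - x \<in> Ii 1"
  show "unit y" unfolding unit_def
  proof
    show "y \<in> Oo" by fact
    show "y \<notin> Ii 1"
    proof
      assume "y \<in> Ii 1"
      then have "y - (y - x) \<in> Ii 1" using a by blast
      then show False using a by (simp add: unit_def)
    qed
  qed
qed

lemma unit_1plus2: "x \<in> Oo \<Longrightarrow> unit (1 + 2 * x)"
  by (rule unit_cong[OF unit_1]) (use two_I[of x] in auto)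

lemma two_mult_I: "2 * y \<in> Ii (Suc k) \<longleftrightarrow> y \<in> Ii k"
  using pow2_mult_I[of 1 y k] by simp
lemma four_mult_I: "4 * y \<in> Ii (Suc (Suc k)) \<longleftrightarrow> y \<in> Ii k"
  using pow2_mult_I[of 2 y k] by simp

end


lemma cov_gen:
  fixes A :: "'a set" and E :: "'a \<Rightarrow> 'a \<Rightarrow> bool"
  assumes Es: "\<And>x y. x\<in>A \<Longrightarrow> y\<in>A \<Longrightarrow> E x y \<Longrightarrow> E y x"
   and Et: "\<And>x y z. x\<in>A \<Longrightarrow> y\<in>A \<Longrightarrow> z\<in>A \<Longrightarrow> E x y \<Longrightarrow> E y z \<Longrightarrow> E x z"
   and DA: "D \<subseteq> A" and D'A: "D' \<subseteq> A"
   and Dex: "\<And>x. x\<in>A \<Longrightarrow> \<exists>d\<in>D. E x d"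
   and Dun: "\<And>d d'. d\<in>D \<Longrightarrow> d'\<in>D \<Longrightarrow> E d d' \<Longrightarrow> d = d'"
   and D'ex: "\<And>x. x\<in>A \<Longrightarrow> \<exists>d\<in>D'. E x d"
   and D'un: "\<And>d d'. d\<in>D' \<Longrightarrow> d'\<in>D' \<Longrightarrow> E d d' \<Longrightarrow> d = d'"
   and fA: "\<And>x. x\<in>A \<Longrightarrow> f x \<in> A" and gA: "\<And>x. x\<in>A \<Longrightarrow> h x \<in> A"
   and hf: "\<And>x. x\<in>A \<Longrightarrow> h (f x) = x" and fh: "\<And>x. x\<in>A \<Longrightarrow> f (h x) = x"
   and fE: "\<And>x y. x\<in>A \<Longrightarrow> y\<in>A \<Longrightarrow> E x y \<Longrightarrow> E (f x) (f y)"
   and hE: "\<And>x y. x\<in>A \<Longrightarrow> y\<in>A \<Longrightarrow> E x y \<Longrightarrow> E (h x) (h y)"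
   and PE: "\<And>x y. x\<in>A \<Longrightarrow> y\<in>A \<Longrightarrow> E x y \<Longrightarrow> P x = P y"
  shows "card {x\<in>D. P (f x)} = card {y\<in>D'. P y}"
proof -
  define g where "g x = (SOME d. d \<in> D' \<and> E (f x) d)" for x
  have g: "g x \<in> D' \<and> E (f x) (g x)" if "x \<in> A" for x
    unfolding g_def by (rule someI_ex) (use D'ex fA that in blast)
  have "bij_betw g {x\<in>D. P (f x)} {y\<in>D'. P y}"
  proof (rule bij_betwI')
    fix x y assume x: "x \<in> {x\<in>D. P (f x)}" and y: "y \<in> {x\<in>D. P (f x)}"
    show "(g x = g y) = (x = y)"
    proof
      assume e: "g x = g y"
      have xA: "x \<in> A" and yA: "y \<in> A" using x y DA by auto
      have "E (f x) (g x)" "E (f y) (g y)" using g xA yA by auto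
      moreover have "g x \<in> A" using g xA D'A by auto
      ultimately have "E (f x) (f y)" using e Es Et fA xA yA by metis
      then have "E (h (f x)) (h (f y))" using hE fA xA yA by blast
      then have "E x y" using hf xA yA by simp
      then show "x = y" using Dun x y by blast
    qed simp
  next
    fix x assume x: "x \<in> {x\<in>D. P (f x)}"
    then have xA: "x \<in> A" using DA by auto
    have "P (f x) = P (g x)" using g[OF xA] PE fA xA D'A by blast
    then show "g x \<in> {y\<in>D'. P y}" using x g[OF xA] by auto
  next
    fix y assume y: "y \<in> {y\<in>D'. P y}"
    then have yA: "y \<in> A" using D'A by auto
    obtain x where x: "x \<in> D" "E (h y) x" using Dex gA yA by blast
    have xA: "x \<in> A" using x DA by auto
    have "E (f (h y)) (f x)" using fE x gA yA xA by blast
    then have Eyx: "E y (f x)" using fh yA by simp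
    have Pfx: "P (f x)" using PE[OF yA fA[OF xA] Eyx] y by simp
    have "E y (g x)" using Et[OF yA fA[OF xA] _ Eyx] g[OF xA] D'A by auto
    then have "y = g x" using D'un y g[OF xA] by blast
    then show "\<exists>x\<in>{x\<in>D. P (f x)}. y = g x" using x Pfx by blast
  qed
  then show ?thesis by (rule bij_betw_same_card)
qed

context dyad begin

definition rel1 :: "('k \<times> 'k) set" where
  "rel1 = {(x, y). x \<in> Oo \<and> y \<in> Oo \<and> x - y \<in> Ii 1}"

lemma equiv_rel1: "equiv Oo rel1"
proof (rule equivI)
  show "refl_on Oo rel1" by (rule refl_onI) (auto simp: rel1_def)
  show "rel1 \<subseteq> Oo \<times> Oo" by (auto simp: rel1_def)
  show "sym rel1" unfolding sym_def rel1_def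
    by (auto, metis I_neg minus_diff_eq)
  show "trans rel1"
  proof (rule transI)
    fix x y z assume h1: "(x, y) \<in> rel1" and h2: "(y, z) \<in> rel1"
    have a: "x - y \<in> Ii 1" "y - z \<in> Ii 1" "x \<in> Oo" "z \<in> Oo" using h1 h2 unfolding rel1_def by auto
    have "(x - y) + (y - z) \<in> Ii 1" by (rule I_add[OF a(1) a(2)])
    then have "x - z \<in> Ii 1" by simp
    then show "(x, z) \<in> rel1" using a unfolding rel1_def by simp
  qed
qed

definition rep0 :: "'k set \<Rightarrow> 'k" where
  "rep0 C = (if 0 \<in> C then 0 else if 1 \<in> C then 1 else SOME x. x \<in> C)"

definition R :: "'k set" where "R = rep0 ` (Oo // rel1)"

lemma rep0_in: "C \<in> Oo // rel1 \<Longrightarrow> rep0 C \<in> C"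
proof -
  assume "C \<in> Oo // rel1"
  then have "C \<noteq> {}" using equiv_rel1 in_quotient_imp_non_empty by blast
  then show ?thesis unfolding rep0_def by (auto intro: someI_ex)
qed

lemma class_mem: "C \<in> Oo // rel1 \<Longrightarrow> \<exists>x\<in>Oo. C = {y. y \<in> Oo \<and> x - y \<in> Ii 1}"
  unfolding quotient_def rel1_def by auto

lemma R_sub: "R \<subseteq> Oo"
  unfolding R_def using rep0_in class_mem by fastforce

lemma R_ex: "x \<in> Oo \<Longrightarrow> \<exists>r\<in>R. x - r \<in> Ii 1"
proof -
  assume x: "x \<in> Oo"
  let ?C = "rel1 `` {x}"
  have C: "?C \<in> Oo // rel1" using x unfolding quotient_def by auto
  have "rep0 ?C \<in> ?C" by (rule rep0_in[OF C])
  then have "x - rep0 ?C \<in> Ii 1" unfolding rel1_def by auto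
  then show ?thesis using C unfolding R_def by blast
qed

lemma R_un: "r \<in> R \<Longrightarrow> r' \<in> R \<Longrightarrow> r - r' \<in> Ii 1 \<Longrightarrow> r = r'"
proof -
  assume r: "r \<in> R" and r': "r' \<in> R" and d: "r - r' \<in> Ii 1"
  obtain C where C: "C \<in> Oo // rel1" "r = rep0 C" using r unfolding R_def by auto
  obtain C' where C': "C' \<in> Oo // rel1" "r' = rep0 C'" using r' unfolding R_def by auto
  obtain x where x: "x \<in> Oo" "C = {y. y \<in> Oo \<and> x - y \<in> Ii 1}" using class_mem[OF C(1)] by auto
  obtain x' where x': "x' \<in> Oo" "C' = {y. y \<in> Oo \<and> x' - y \<in> Ii 1}" using class_mem[OF C'(1)] by auto
  have "r \<in> C" "r' \<in> C'" using rep0_in C C' by auto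
  then have h1: "x - r \<in> Ii 1" "x' - r' \<in> Ii 1" using x x' by auto
  have "x - x' = (x - r) + (r - r') - (x' - r')" by simp
  then have xx: "x - x' \<in> Ii 1" using h1 d by (metis I_add I_diff)
  have "C = C'"
  proof -
    have "x - y \<in> Ii 1 \<longleftrightarrow> x' - y \<in> Ii 1" for y
    proof -
      have "x' - y = (x - y) - (x - x')" "x - y = (x' - y) + (x - x')" by simp_all
      then show ?thesis using xx by (metis I_add I_diff)
    qed
    then show ?thesis using x x' by auto
  qed
  then show "r = r'" using C C' by simp
qed

lemma R_0: "0 \<in> R"
proof -
  obtain r where r: "r \<in> R" "0 - r \<in> Ii 1" using R_ex[of 0] by auto
  let ?C = "rel1 `` {0}"
  have C: "?C \<in> Oo // rel1" unfolding quotient_def by auto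
  have "0 \<in> ?C" unfolding rel1_def by auto
  then have "rep0 ?C = 0" unfolding rep0_def by simp
  then show ?thesis using C unfolding R_def by force
qed

lemma R_1: "1 \<in> R"
proof -
  let ?C = "rel1 `` {1}"
  have C: "?C \<in> Oo // rel1" unfolding quotient_def by auto
  have "0 \<notin> ?C" unfolding rel1_def by auto
  moreover have "1 \<in> ?C" unfolding rel1_def by auto
  ultimately have "rep0 ?C = 1" unfolding rep0_def by simp
  then show ?thesis using C unfolding R_def by force
qed

lemma R_card: "finite R \<and> card R = q"
proof -
  have inj: "inj_on rep0 (Oo // rel1)"
  proof (rule inj_onI)
    fix C C' assume C: "C \<in> Oo // rel1" and C': "C' \<in> Oo // rel1" and e: "rep0 C = rep0 C'"
    have "rep0 C \<in> C" "rep0 C \<in> C'" using rep0_in[OF C] rep0_in[OF C'] e by auto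
    then show "C = C'" using quotient_disj[OF equiv_rel1 C C'] by blast
  qed
  have f: "finite (Oo // rel1)" using resfin unfolding rel1_def by simp
  have c: "card (Oo // rel1) = q" using rescard unfolding rel1_def by simp
  show ?thesis unfolding R_def using inj f c card_image by auto
qed

lemma R_fin: "finite R" using R_card by simp
lemma R_cardq: "card R = q" using R_card by simp

lemma q_ge2: "2 \<le> q"
proof -
  have "{0, 1} \<subseteq> R" using R_0 R_1 by auto
  then have "card {0,(1::'k)} \<le> card R" using R_fin card_mono by blast
  then show ?thesis using R_cardq by simp
qed

definition rep1 :: "'k \<Rightarrow> 'k" where "rep1 x = (THE r. r \<in> R \<and> x - r \<in> Ii 1)"

lemma rep1: "x \<in> Oo \<Longrightarrow> rep1 x \<in> R \<and> x - rep1 x \<in> Ii 1"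
proof -
  assume x: "x \<in> Oo"
  obtain r where r: "r \<in> R" "x - r \<in> Ii 1" using R_ex[OF x] by auto
  have "\<And>r'. r' \<in> R \<and> x - r' \<in> Ii 1 \<Longrightarrow> r' = r"
  proof -
    fix r' assume "r' \<in> R \<and> x - r' \<in> Ii 1"
    moreover have "r' - r = (x - r) - (x - r')" by simp
    ultimately show "r' = r" using R_un r by (metis I_diff)
  qed
  then show ?thesis unfolding rep1_def using r by (metis (mono_tags, lifting) theI)
qed

lemma R_eq: "r \<in> R \<Longrightarrow> x \<in> Oo \<Longrightarrow> x - r \<in> Ii 1 \<Longrightarrow> rep1 x = r"
proof -
  assume a: "r \<in> R" "x \<in> Oo" "x - r \<in> Ii 1"
  have "rep1 x - r = (x - r) - (x - rep1 x)" by simp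
  then have "rep1 x - r \<in> Ii 1" using a rep1[OF a(2)] by (metis I_diff)
  then show ?thesis using R_un rep1 a by blast
qed

lemma R_zero_iff: "r \<in> R \<Longrightarrow> r \<in> Ii 1 \<longleftrightarrow> r = 0"
  using R_un[of r 0] R_0 by auto

definition crs :: "nat \<Rightarrow> 'k set \<Rightarrow> bool" where
  "crs m S \<longleftrightarrow> S \<subseteq> Oo \<and> (\<forall>x\<in>Oo. \<exists>r\<in>S. x - r \<in> Ii m) \<and> (\<forall>r\<in>S. \<forall>r'\<in>S. r - r' \<in> Ii m \<longrightarrow> r = r')"

lemma crs_R: "crs 1 R"
  unfolding crs_def using R_sub R_ex R_un by blast

definition comb :: "nat \<Rightarrow> 'k set \<Rightarrow> 'k set \<Rightarrow> 'k set" where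
  "comb j S T = (\<lambda>(s,t). s + 2^j * t) ` (S \<times> T)"

lemma crs_comb: assumes S: "crs j S" and T: "crs k T" shows "crs (j+k) (comb j S T)"
  unfolding crs_def
proof (intro conjI ballI impI)
  show "comb j S T \<subseteq> Oo"
  proof
    fix x assume "x \<in> comb j S T"
    then obtain s t where "s \<in> S" "t \<in> T" "x = s + 2^j * t" unfolding comb_def by auto
    moreover have "s \<in> Oo" "t \<in> Oo" using S T calculation unfolding crs_def by auto
    ultimately show "x \<in> Oo" by simp
  qed
next
  fix x assume x: "x \<in> Oo"
  obtain s where s: "s \<in> S" "x - s \<in> Ii j" using S x unfolding crs_def by auto
  obtain y where y: "x - s = 2^j * y" "y \<in> Oo" using s(2) unfolding two_pow_ideal_def by auto
  obtain t where t: "t \<in> T" "y - t \<in> Ii k" using T y unfolding crs_def by auto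
  have "x - (s + 2^j * t) = 2^j * (y - t)" using y by (simp add: algebra_simps)
  then have "x - (s + 2^j * t) \<in> Ii (j+k)" using t pow2_mult_I by simp
  moreover have "s + 2^j * t \<in> comb j S T" using s t unfolding comb_def by auto
  ultimately show "\<exists>r\<in>comb j S T. x - r \<in> Ii (j + k)" by blast
next
  fix r r' assume r: "r \<in> comb j S T" and r': "r' \<in> comb j S T" and d: "r - r' \<in> Ii (j+k)"
  obtain s t where st: "s \<in> S" "t \<in> T" "r = s + 2^j * t" using r unfolding comb_def by auto
  obtain s' t' where st': "s' \<in> S" "t' \<in> T" "r' = s' + 2^j * t'" using r' unfolding comb_def by auto
  have tO: "t \<in> Oo" "t' \<in> Oo" using st st' T unfolding crs_def by auto
  have "s - s' = (r - r') - 2^j * (t - t')" using st st' by (simp add: algebra_simps)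
  moreover have "r - r' \<in> Ii j" using d I_mono[of j "j+k"] by simp
  moreover have "2^j * (t - t') \<in> Ii j" using tO by auto
  ultimately have "s - s' \<in> Ii j" by (metis I_diff)
  then have ss: "s = s'" using S st st' unfolding crs_def by blast
  then have "r - r' = 2^j * (t - t')" using st st' by (simp add: algebra_simps)
  then have "t - t' \<in> Ii k" using d pow2_mult_I by simp
  then have "t = t'" using T st st' unfolding crs_def by blast
  then show "r = r'" using ss st st' by simp
qed

lemma inj_comb: assumes S: "crs j S" and T: "T \<subseteq> Oo"
  shows "inj_on (\<lambda>(s,t). s + 2^j * t) (S \<times> T)"
proof (rule inj_onI, clarify)
  fix s t s' t' assume st: "s \<in> S" "t \<in> T" "s' \<in> S" "t' \<in> T"
    and e: "s + 2^j * t = s' + 2^j * (t'::'k)"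
  have "s - s' = 2^j * (t' - t)" using e by (simp add: algebra_simps)
  then have "s - s' \<in> Ii j" using T st by auto
  then have ss: "s = s'" using S st unfolding crs_def by blast
  then have "2^j * t = 2^j * t'" using e by simp
  then show "s = s' \<and> t = t'" using ss two_nz by simp
qed

fun Rep :: "nat \<Rightarrow> 'k set" where
  "Rep 0 = {0}"
| "Rep (Suc m) = comb 1 R (Rep m)"

lemma crs_0: "crs 0 {0}"
  unfolding crs_def by (auto simp: O_I0)

lemma crs_Rep: "crs m (Rep m)"
proof (induction m)
  case 0 then show ?case using crs_0 by simp
next
  case (Suc m)
  then show ?case using crs_comb[OF crs_R Suc] by simp
qed

lemma Rep_sub: "Rep m \<subseteq> Oo" using crs_Rep unfolding crs_def by blast

lemma Rep_card: "finite (Rep m) \<and> card (Rep m) = q^m"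
proof (induction m)
  case 0 then show ?case by simp
next
  case (Suc m)
  have inj: "inj_on (\<lambda>(s,t). s + 2^1 * t) (R \<times> Rep m)" using inj_comb[OF crs_R Rep_sub] .
  have "card (Rep (Suc m)) = card (R \<times> Rep m)"
    using card_image[OF inj] by (simp add: comb_def)
  also have "\<dots> = q * q^m" using Suc R_fin R_cardq by (simp add: card_cartesian_product)
  finally show ?case using Suc R_fin by (simp add: comb_def)
qed

lemma Rep_1: "Rep 1 = R"
  by (simp add: comb_def image_def)

end


context dyad begin

definition O3 :: "('k \<times> 'k \<times> 'k) set" where "O3 = Oo \<times> Oo \<times> Oo"

definition tc :: "nat \<Rightarrow> 'k \<times> 'k \<times> 'k \<Rightarrow> 'k \<times> 'k \<times> 'k \<Rightarrow> bool" where
  "tc m x y \<longleftrightarrow> fst x - fst y \<in> Ii m \<and> fst (snd x) - fst (snd y) \<in> Ii m \<and> snd (snd x) - snd (snd y) \<in> Ii m"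

lemma tc_simp[simp]: "tc m (a,b,c) (a',b',c') \<longleftrightarrow> a - a' \<in> Ii m \<and> b - b' \<in> Ii m \<and> c - c' \<in> Ii m"
  by (simp add: tc_def)

lemma O3_simp[simp]: "(a,b,c) \<in> O3 \<longleftrightarrow> a \<in> Oo \<and> b \<in> Oo \<and> c \<in> Oo"
  by (simp add: O3_def)

definition S3 :: "'k set \<Rightarrow> ('k \<times> 'k \<times> 'k) set" where "S3 S = S \<times> S \<times> S"

lemma S3_simp[simp]: "(a,b,c) \<in> S3 S \<longleftrightarrow> a \<in> S \<and> b \<in> S \<and> c \<in> S"
  by (simp add: S3_def)

definition inv3 :: "nat \<Rightarrow> ('k \<times> 'k \<times> 'k \<Rightarrow> bool) \<Rightarrow> bool" where
  "inv3 m P \<longleftrightarrow> (\<forall>a b c a' b' c'. a \<in> Oo \<longrightarrow> b \<in> Oo \<longrightarrow> c \<in> Oo \<longrightarrow> a' \<in> Oo \<longrightarrow> b' \<in> Oo \<longrightarrow> c' \<in> Oo \<longrightarrow>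
      a - a' \<in> Ii m \<longrightarrow> b - b' \<in> Ii m \<longrightarrow> c - c' \<in> Ii m \<longrightarrow> P (a,b,c) = P (a',b',c'))"

definition cnt :: "nat \<Rightarrow> ('k \<times> 'k \<times> 'k \<Rightarrow> bool) \<Rightarrow> nat" where
  "cnt m P = card {x \<in> S3 (Rep m). P x}"

lemma crsD1: "crs m S \<Longrightarrow> S \<subseteq> Oo" unfolding crs_def by blast
lemma crsD2: "crs m S \<Longrightarrow> x \<in> Oo \<Longrightarrow> \<exists>r\<in>S. x - r \<in> Ii m" unfolding crs_def by blast
lemma crsD3: "crs m S \<Longrightarrow> r \<in> S \<Longrightarrow> r' \<in> S \<Longrightarrow> r - r' \<in> Ii m \<Longrightarrow> r = r'" unfolding crs_def by blast

lemma I_sym: "a - b \<in> Ii m \<Longrightarrow> b - a \<in> Ii m"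
  by (metis I_neg minus_diff_eq)
lemma I_trans: "a - b \<in> Ii m \<Longrightarrow> b - c \<in> Ii m \<Longrightarrow> a - c \<in> Ii m"
  by (metis I_add diff_add_cancel add_diff_eq)

lemma cov3:
  assumes S: "crs m S" and S': "crs m S'"
   and fA: "\<And>x. x\<in>O3 \<Longrightarrow> f x \<in> O3" and hA: "\<And>x. x\<in>O3 \<Longrightarrow> h x \<in> O3"
   and hf: "\<And>x. x\<in>O3 \<Longrightarrow> h (f x) = x" and fh: "\<And>x. x\<in>O3 \<Longrightarrow> f (h x) = x"
   and fE: "\<And>x y. x\<in>O3 \<Longrightarrow> y\<in>O3 \<Longrightarrow> tc m x y \<Longrightarrow> tc m (f x) (f y)"
   and hE: "\<And>x y. x\<in>O3 \<Longrightarrow> y\<in>O3 \<Longrightarrow> tc m x y \<Longrightarrow> tc m (h x) (h y)"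
   and P: "inv3 m P"
  shows "card {x\<in>S3 S. P (f x)} = card {y\<in>S3 S'. P y}"
proof (rule cov_gen[where A=O3 and E="tc m"])
  show "\<And>x y. x \<in> O3 \<Longrightarrow> y \<in> O3 \<Longrightarrow> tc m x y \<Longrightarrow> tc m y x"
    unfolding tc_def using I_sym by blast
  show "\<And>x y z. x \<in> O3 \<Longrightarrow> y \<in> O3 \<Longrightarrow> z \<in> O3 \<Longrightarrow> tc m x y \<Longrightarrow> tc m y z \<Longrightarrow> tc m x z"
    unfolding tc_def using I_trans by blast
  show "S3 S \<subseteq> O3" "S3 S' \<subseteq> O3" using crsD1[OF S] crsD1[OF S'] unfolding S3_def O3_def by auto
  have ex: "\<exists>d\<in>S3 T. tc m x d" if T: "crs m T" and x: "x \<in> O3" for T x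
  proof -
    obtain a b c where abc: "x = (a,b,c)" by (cases x) auto
    have "a \<in> Oo" "b \<in> Oo" "c \<in> Oo" using x abc by auto
    then obtain a' b' c' where "a' \<in> T" "a - a' \<in> Ii m" "b' \<in> T" "b - b' \<in> Ii m" "c' \<in> T" "c - c' \<in> Ii m"
      using crsD2[OF T] by metis
    then show ?thesis using abc by (intro bexI[of _ "(a',b',c')"]) auto
  qed
  have un: "d = d'" if T: "crs m T" and h: "d \<in> S3 T" "d' \<in> S3 T" "tc m d d'" for T d d'
  proof -
    obtain a b c where d: "d = (a,b,c)" by (cases d) auto
    obtain a' b' c' where d': "d' = (a',b',c')" by (cases d') auto
    have U: "\<And>r r'. r \<in> T \<Longrightarrow> r' \<in> T \<Longrightarrow> r - r' \<in> Ii m \<Longrightarrow> r = r'" using crsD3[OF T] by blast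
    have "a = a'" "b = b'" "c = c'" using h d d' U[of a a'] U[of b b'] U[of c c'] by auto
    then show ?thesis using d d' by simp
  qed
  show "\<And>x. x \<in> O3 \<Longrightarrow> \<exists>d\<in>S3 S. tc m x d" using ex S by blast
  show "\<And>x. x \<in> O3 \<Longrightarrow> \<exists>d\<in>S3 S'. tc m x d" using ex S' by blast
  show "\<And>d d'. d \<in> S3 S \<Longrightarrow> d' \<in> S3 S \<Longrightarrow> tc m d d' \<Longrightarrow> d = d'" using un S by blast
  show "\<And>d d'. d \<in> S3 S' \<Longrightarrow> d' \<in> S3 S' \<Longrightarrow> tc m d d' \<Longrightarrow> d = d'" using un S' by blast
  show "\<And>x y. x \<in> O3 \<Longrightarrow> y \<in> O3 \<Longrightarrow> tc m x y \<Longrightarrow> P x = P y"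
  proof -
    fix x y assume x: "x \<in> O3" and y: "y \<in> O3" and e: "tc m x y"
    obtain a b c where a: "x = (a,b,c)" by (cases x) auto
    obtain a' b' c' where a': "y = (a',b',c')" by (cases y) auto
    show "P x = P y" using P[unfolded inv3_def, rule_format, of a b c a' b' c'] x y e a a' by simp
  qed
  show "\<And>x. x \<in> O3 \<Longrightarrow> f x \<in> O3" by (rule fA)
  show "\<And>x. x \<in> O3 \<Longrightarrow> h x \<in> O3" by (rule hA)
  show "\<And>x. x \<in> O3 \<Longrightarrow> h (f x) = x" by (rule hf)
  show "\<And>x. x \<in> O3 \<Longrightarrow> f (h x) = x" by (rule fh)
  show "\<And>x y. x \<in> O3 \<Longrightarrow> y \<in> O3 \<Longrightarrow> tc m x y \<Longrightarrow> tc m (f x) (f y)" by (rule fE)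
  show "\<And>x y. x \<in> O3 \<Longrightarrow> y \<in> O3 \<Longrightarrow> tc m x y \<Longrightarrow> tc m (h x) (h y)" by (rule hE)
qed

lemma cnt_crs: assumes S: "crs m S" and P: "inv3 m P"
  shows "card {x\<in>S3 S. P x} = cnt m P"
proof -
  have "card {x\<in>S3 S. P (id x)} = card {y\<in>S3 (Rep m). P y}"
    by (rule cov3[OF S crs_Rep _ _ _ _ _ _ P]) simp_all
  then show ?thesis unfolding cnt_def by simp
qed

lemma S3_card: "finite S \<Longrightarrow> finite (S3 S) \<and> card (S3 S) = card S ^ 3"
  by (simp add: S3_def card_cartesian_product power3_eq_cube)

lemma S3_Rep: "finite (S3 (Rep m)) \<and> card (S3 (Rep m)) = q^(3*m)"
  using S3_card[of "Rep m"] Rep_card[of m] by (simp add: power_mult[symmetric] mult.commute)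

definition cmb3 :: "nat \<Rightarrow> 'k \<times> 'k \<times> 'k \<Rightarrow> 'k \<times> 'k \<times> 'k \<Rightarrow> 'k \<times> 'k \<times> 'k" where
  "cmb3 j s t = (fst s + 2^j * fst t, fst (snd s) + 2^j * fst (snd t), snd (snd s) + 2^j * snd (snd t))"

lemma cmb3_simp[simp]: "cmb3 j (a,b,c) (a',b',c') = (a + 2^j*a', b + 2^j*b', c + 2^j*c')"
  by (simp add: cmb3_def)

lemma inv3_mono: assumes P: "inv3 j P" and jm: "j \<le> m" shows "inv3 m P"
proof -
  have M: "\<And>x. x \<in> Ii m \<Longrightarrow> x \<in> Ii j" using I_mono[OF jm] .
  show ?thesis unfolding inv3_def
  proof (intro allI impI)
    fix a b c a' b' c' :: 'k
    assume h: "a \<in> Oo" "b \<in> Oo" "c \<in> Oo" "a' \<in> Oo" "b' \<in> Oo" "c' \<in> Oo" "a - a' \<in> Ii m" "b - b' \<in> Ii m" "c - c' \<in> Ii m"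
    show "P (a,b,c) = P (a',b',c')"
      using P[unfolded inv3_def, rule_format, OF h(1-6) M[OF h(7)] M[OF h(8)] M[OF h(9)]] .
  qed
qed

lemma cnt_decomp: assumes P: "inv3 (j+k) P"
  shows "cnt (j+k) P = (\<Sum>s\<in>S3 (Rep j). card {t \<in> S3 (Rep k). P (cmb3 j s t)})"
proof -
  let ?C = "comb j (Rep j) (Rep k)"
  have C: "crs (j+k) ?C" using crs_comb[OF crs_Rep crs_Rep] .
  let ?g = "\<lambda>(s,t). cmb3 j s t"
  have inj1: "inj_on (\<lambda>(s,t). s + 2^j * t) (Rep j \<times> Rep k)" using inj_comb[OF crs_Rep Rep_sub] .
  have inj1': "s = s' \<and> t = t'" if "s \<in> Rep j" "s' \<in> Rep j" "t \<in> Rep k" "t' \<in> Rep k"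
     "s + 2^j * t = s' + 2^j * t'" for s s' t t'
    using inj_onD[OF inj1, of "(s,t)" "(s',t')"] that by auto
  have inj: "inj_on ?g (S3 (Rep j) \<times> S3 (Rep k))"
  proof (rule inj_onI)
    fix st st' assume h1: "st \<in> S3 (Rep j) \<times> S3 (Rep k)" and h2: "st' \<in> S3 (Rep j) \<times> S3 (Rep k)"
      and e: "?g st = ?g st'"
    obtain a b c a' b' c' where st: "st = ((a,b,c),(a',b',c'))" by (metis prod.exhaust)
    obtain x y z x' y' z' where st': "st' = ((x,y,z),(x',y',z'))" by (metis prod.exhaust)
    have m: "a \<in> Rep j" "b \<in> Rep j" "c \<in> Rep j" "a' \<in> Rep k" "b' \<in> Rep k" "c' \<in> Rep k"
       "x \<in> Rep j" "y \<in> Rep j" "z \<in> Rep j" "x' \<in> Rep k" "y' \<in> Rep k" "z' \<in> Rep k"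
      using h1 h2 st st' by auto
    have "a + 2^j*a' = x + 2^j*x'" "b + 2^j*b' = y + 2^j*y'" "c + 2^j*c' = z + 2^j*z'"
      using e st st' by auto
    then have "a = x \<and> a' = x'" "b = y \<and> b' = y'" "c = z \<and> c' = z'"
      using inj1' m by blast+
    then show "st = st'" using st st' by simp
  qed
  have img: "S3 ?C = ?g ` (S3 (Rep j) \<times> S3 (Rep k))"
  proof
    show "S3 ?C \<subseteq> ?g ` (S3 (Rep j) \<times> S3 (Rep k))"
    proof
      fix x assume "x \<in> S3 ?C"
      then obtain u v w where x: "x = (u,v,w)" "u \<in> ?C" "v \<in> ?C" "w \<in> ?C" unfolding S3_def by auto
      obtain a a' where a: "a \<in> Rep j" "a' \<in> Rep k" "u = a + 2^j*a'" using x unfolding comb_def by auto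
      obtain b b' where b: "b \<in> Rep j" "b' \<in> Rep k" "v = b + 2^j*b'" using x unfolding comb_def by auto
      obtain c c' where c: "c \<in> Rep j" "c' \<in> Rep k" "w = c + 2^j*c'" using x unfolding comb_def by auto
      have "x = ?g ((a,b,c),(a',b',c'))" using x a b c by simp
      moreover have "((a,b,c),(a',b',c')) \<in> S3 (Rep j) \<times> S3 (Rep k)" using a b c by simp
      ultimately show "x \<in> ?g ` (S3 (Rep j) \<times> S3 (Rep k))" by blast
    qed
    show "?g ` (S3 (Rep j) \<times> S3 (Rep k)) \<subseteq> S3 ?C"
    proof
      fix x assume "x \<in> ?g ` (S3 (Rep j) \<times> S3 (Rep k))"
      then obtain st where st: "st \<in> S3 (Rep j) \<times> S3 (Rep k)" "x = ?g st" by blast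
      obtain a b c a' b' c' where e: "st = ((a,b,c),(a',b',c'))" by (metis prod.exhaust)
      have m: "a \<in> Rep j" "b \<in> Rep j" "c \<in> Rep j" "a' \<in> Rep k" "b' \<in> Rep k" "c' \<in> Rep k"
        using st e by auto
      have "a + 2^j*a' \<in> ?C" using m unfolding comb_def by (auto intro!: image_eqI[where x="(a,a')"])
      moreover have "b + 2^j*b' \<in> ?C" using m unfolding comb_def by (auto intro!: image_eqI[where x="(b,b')"])
      moreover have "c + 2^j*c' \<in> ?C" using m unfolding comb_def by (auto intro!: image_eqI[where x="(c,c')"])
      ultimately show "x \<in> S3 ?C" using st e by simp
    qed
  qed
  have "cnt (j+k) P = card {x\<in>S3 ?C. P x}" using cnt_crs[OF C P] by simp
  also have "{x\<in>S3 ?C. P x} = ?g ` {st \<in> S3 (Rep j) \<times> S3 (Rep k). P (?g st)}"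
    by (simp only: img) blast
  also have "card \<dots> = card {st \<in> S3 (Rep j) \<times> S3 (Rep k). P (?g st)}"
    by (rule card_image) (rule inj_on_subset[OF inj], blast)
  also have "{st \<in> S3 (Rep j) \<times> S3 (Rep k). P (?g st)} = (SIGMA s:S3 (Rep j). {t \<in> S3 (Rep k). P (cmb3 j s t)})"
    by (intro set_eqI) (auto simp del: cmb3_simp S3_simp)
  also have "card \<dots> = (\<Sum>s\<in>S3 (Rep j). card {t \<in> S3 (Rep k). P (cmb3 j s t)})"
    using S3_Rep by (intro card_SigmaI) auto
  finally show ?thesis .
qed

lemma S3_O3: "x \<in> S3 (Rep m) \<Longrightarrow> x \<in> O3"
  using Rep_sub unfolding S3_def O3_def by auto

lemma cmb3_O3: "s \<in> O3 \<Longrightarrow> t \<in> O3 \<Longrightarrow> cmb3 j s t \<in> O3"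
  by (cases s, cases t) auto

lemma cnt_refine: assumes P: "inv3 j P"
  shows "cnt (j+k) P = q^(3*k) * cnt j P"
proof -
  have P': "inv3 (j+k) P" using inv3_mono[OF P] by simp
  have inner: "card {t \<in> S3 (Rep k). P (cmb3 j s t)} = (if P s then q^(3*k) else 0)"
    if s: "s \<in> S3 (Rep j)" for s
  proof -
    have "P (cmb3 j s t) = P s" if t: "t \<in> S3 (Rep k)" for t
    proof -
      obtain a b c where abc: "s = (a,b,c)" by (cases s) auto
      obtain a' b' c' where abc': "t = (a',b',c')" by (cases t) auto
      have O: "a \<in> Oo" "b \<in> Oo" "c \<in> Oo" "a' \<in> Oo" "b' \<in> Oo" "c' \<in> Oo"
        using S3_O3[OF s] S3_O3[OF t] abc abc' by auto
      show ?thesis using P[unfolded inv3_def, rule_format, of "a + 2^j*a'" "b + 2^j*b'" "c + 2^j*c'" a b c] O abc abc'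
        by simp
    qed
    then have "{t \<in> S3 (Rep k). P (cmb3 j s t)} = (if P s then S3 (Rep k) else {})" by auto
    then show ?thesis using S3_Rep by simp
  qed
  have "cnt (j+k) P = (\<Sum>s\<in>S3 (Rep j). (if P s then q^(3*k) else 0))"
    using cnt_decomp[OF P'] inner by simp
  also have "\<dots> = (\<Sum>s\<in>{s\<in>S3 (Rep j). P s}. q^(3*k))"
    using S3_Rep by (simp add: sum.inter_filter[symmetric])
  also have "\<dots> = q^(3*k) * cnt j P" unfolding cnt_def by simp
  finally show ?thesis .
qed

end


context dyad begin

lemma I_elim: "x \<in> Ii m \<Longrightarrow> \<exists>d\<in>Oo. x = 2^m * d"
  unfolding two_pow_ideal_def by auto

lemma sqrt_step:
  assumes z: "z \<in> Oo" "z - 1 \<in> Ii 1" and c: "c \<in> Oo" and h: "c - z^2 \<in> Ii (n+3)"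
  shows "\<exists>z'. z' \<in> Oo \<and> z' - z \<in> Ii (n+2) \<and> c - z'^2 \<in> Ii (n+4) \<and> z' - 1 \<in> Ii 1"
proof -
  have zu: "unit z" using unit_cong[OF unit_1 z(1) z(2)] .
  obtain d where d: "d \<in> Oo" "c - z^2 = 2^(n+3) * d" using I_elim[OF h] by auto
  define e where "e = d / z"
  have eO: "e \<in> Oo" using unit_div_O[OF zu d(1)] by (simp add: e_def)
  have ez: "e * z = d" using unit_nz[OF zu] by (simp add: e_def)
  define z' where "z' = z + 2^(n+2) * e"
  have "z'^2 = z^2 + 2^(n+3) * (e * z) + 2^(n+4) * (2^n * e^2)"
    unfolding z'_def by (simp add: power2_eq_square algebra_simps power_add)
  then have "c - z'^2 = 2^(n+4) * (- (2^n * e^2))" using d(2) ez by (simp add: algebra_simps)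
  then have A: "c - z'^2 \<in> Ii (n+4)" using eO by simp
  have B: "z' - z \<in> Ii (n+2)"
  proof -
    have "z' - z = 2^(n+2)*e" by (simp add: z'_def)
    then show ?thesis using pow2_I[OF eO, of "n+2"] by metis
  qed
  have "z' - z \<in> Ii 1" using I_mono[of 1 "n+2"] B by simp
  then have C: "z' - 1 \<in> Ii 1" using z(2) by (metis I_add diff_add_cancel add_diff_eq)
  have "z' \<in> Oo" unfolding z'_def using z eO by simp
  then show ?thesis using A B C by blast
qed

lemma sqrt_lemma:
  assumes c: "c \<in> Oo" and h: "c - 1 \<in> Ii 3"
  shows "\<exists>z. z^2 = c"
proof -
  define zs where "zs = rec_nat 1 (\<lambda>n z. SOME z'. z' \<in> Oo \<and> z' - z \<in> Ii (n+2) \<and> c - z'^2 \<in> Ii (n+4) \<and> z' - 1 \<in> Ii 1)"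
  have zs0: "zs 0 = 1" by (simp add: zs_def)
  have zsS: "zs (Suc n) = (SOME z'. z' \<in> Oo \<and> z' - zs n \<in> Ii (n+2) \<and> c - z'^2 \<in> Ii (n+4) \<and> z' - 1 \<in> Ii 1)" for n
    by (simp add: zs_def)
  have inv: "zs n \<in> Oo \<and> c - (zs n)^2 \<in> Ii (n+3) \<and> zs n - 1 \<in> Ii 1" for n
  proof (induction n)
    case 0 then show ?case using h zs0 by simp
  next
    case (Suc n)
    have "\<exists>z'. z' \<in> Oo \<and> z' - zs n \<in> Ii (n+2) \<and> c - z'^2 \<in> Ii (n+4) \<and> z' - 1 \<in> Ii 1"
      using sqrt_step[of "zs n" c n] Suc c by blast
    then have "zs (Suc n) \<in> Oo \<and> zs (Suc n) - zs n \<in> Ii (n+2) \<and> c - (zs (Suc n))^2 \<in> Ii (n+4) \<and> zs (Suc n) - 1 \<in> Ii 1"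
      unfolding zsS by (rule someI_ex)
    then show ?case by (simp add: add.commute)
  qed
  have dif: "zs (Suc n) - zs n \<in> Ii (n+2)" for n
  proof -
    have "\<exists>z'. z' \<in> Oo \<and> z' - zs n \<in> Ii (n+2) \<and> c - z'^2 \<in> Ii (n+4) \<and> z' - 1 \<in> Ii 1"
      using sqrt_step[of "zs n" c n] inv c by blast
    then have "zs (Suc n) \<in> Oo \<and> zs (Suc n) - zs n \<in> Ii (n+2) \<and> c - (zs (Suc n))^2 \<in> Ii (n+4) \<and> zs (Suc n) - 1 \<in> Ii 1"
      unfolding zsS by (rule someI_ex)
    then show ?thesis by simp
  qed
  have cau: "zs m - zs n \<in> Ii (n+2)" if "n \<le> m" for m n
    using that
  proof (induction m rule: dec_induct)
    case base then show ?case by simp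
  next
    case (step m)
    have "zs (Suc m) - zs m \<in> Ii (n+2)" using dif[of m] I_mono[of "n+2" "m+2"] step by simp
    then have "(zs (Suc m) - zs m) + (zs m - zs n) \<in> Ii (n+2)" using step by blast
    then show ?case by simp
  qed
  have "\<forall>N::int. \<exists>M. \<forall>m\<ge>M. \<forall>n\<ge>M. zs m = zs n \<or> N \<le> val (zs m - zs n)"
  proof
    fix N :: int
    show "\<exists>M. \<forall>m\<ge>M. \<forall>n\<ge>M. zs m = zs n \<or> N \<le> val (zs m - zs n)"
    proof (intro exI allI impI)
      fix m n assume m: "nat N \<le> m" and n: "nat N \<le> n"
      have "zs m - zs n \<in> Ii (nat N)"
      proof (cases "n \<le> m")
        case True
        then show ?thesis using cau[OF True] I_mono[of "nat N" "n+2"] n by simp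
      next
        case False
        then have "zs n - zs m \<in> Ii (m+2)" using cau by simp
        then have "zs n - zs m \<in> Ii (nat N)" using I_mono[of "nat N" "m+2"] m by simp
        then show ?thesis using I_sym by blast
      qed
      then show "zs m = zs n \<or> N \<le> val (zs m - zs n)" by (auto simp: memI split: if_splits)
    qed
  qed
  then obtain L where L: "\<forall>N::int. \<exists>M. \<forall>n\<ge>M. zs n = L \<or> N \<le> val (zs n - L)"
    using complete by blast
  show ?thesis
  proof (rule ccontr)
    assume nz: "\<not> (\<exists>z. z^2 = c)"
    define V where "V = val (c - L^2)"
    obtain M where M: "\<forall>n\<ge>M. zs n = L \<or> max 0 (V+1) \<le> val (zs n - L)" using L by blast
    define n where "n = max M (nat (V+1))"
    have "zs n = L \<or> max 0 (V+1) \<le> val (zs n - L)" using M by (simp add: n_def)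
    then have d: "zs n - L \<in> Ii (nat (V+1))" by (auto simp: memI)
    have zO: "zs n \<in> Oo" using inv by blast
    have "zs n - L \<in> Oo" using d I_sub_O by blast
    then have "zs n - (zs n - L) \<in> Oo" by (rule O_diff[OF zO])
    then have LO: "L \<in> Oo" by simp
    have eq: "c - L^2 = (c - (zs n)^2) + (zs n - L) * (zs n + L)" by (simp add: power2_eq_square algebra_simps)
    have X: "c - (zs n)^2 \<in> Ii (nat (V+1))" using inv[of n] I_mono[of "nat (V+1)" "n+3"] by (simp add: n_def)
    have Y: "(zs n - L) * (zs n + L) \<in> Ii (nat (V+1))" using d zO LO by simp
    have "c - L^2 \<in> Ii (nat (V+1))" by (subst eq) (rule I_add[OF X Y])
    moreover have "c - L^2 \<noteq> 0" using nz by auto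
    moreover have "c - L^2 \<in> Oo" using c LO by simp
    ultimately show False by (auto simp: memI memO V_def)
  qed
qed

end


locale dyadB = dyad val q for val :: "'k::field \<Rightarrow> int" and q :: nat +
  fixes ua wb :: 'k
  assumes uaU: "unit ua" and wbU: "unit wb"
    and aniso: "\<And>x0 x1 x2. x0^2 - (1+2*ua)*x1^2 - (1+2*wb)*x2^2 = 0 \<Longrightarrow> x0 = 0 \<and> x1 = 0 \<and> x2 = 0"
begin

lemma uaO[simp]: "ua \<in> Oo" using uaU unit_O by blast
lemma wbO[simp]: "wb \<in> Oo" using wbU unit_O by blast

definition Bf :: "'k \<times> 'k \<times> 'k \<Rightarrow> 'k" where
  "Bf x = (case x of (a,b,c) \<Rightarrow> a^2 - (1+2*ua)*b^2 - (1+2*wb)*c^2)"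

lemma Bf_simp[simp]: "Bf (a,b,c) = a^2 - (1+2*ua)*b^2 - (1+2*wb)*c^2"
  by (simp add: Bf_def)

definition Qf :: "'k \<Rightarrow> 'k \<Rightarrow> 'k" where
  "Qf g1 g2 = ua*g1^2 - g1*g2 + wb*g2^2"

lemma sqdiff: "a \<in> Oo \<Longrightarrow> a' \<in> Oo \<Longrightarrow> a - a' \<in> Ii m \<Longrightarrow> a^2 - a'^2 \<in> Ii m"
proof -
  assume h: "a \<in> Oo" "a' \<in> Oo" "a - a' \<in> Ii m"
  have "a^2 - a'^2 = (a - a') * (a + a')" by (simp add: power2_eq_square algebra_simps)
  then show ?thesis using h by simp
qed

lemma sqdiff1: "a \<in> Oo \<Longrightarrow> a' \<in> Oo \<Longrightarrow> a - a' \<in> Ii (Suc m) \<Longrightarrow> a^2 - a'^2 \<in> Ii (Suc (Suc m))"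
proof -
  assume h: "a \<in> Oo" "a' \<in> Oo" "a - a' \<in> Ii (Suc m)"
  have e: "a^2 - a'^2 = (a - a') * ((a - a') + 2 * a')" by (simp add: power2_eq_square algebra_simps)
  have "a - a' \<in> Ii 1" using h(3) I_mono[of 1 "Suc m"] by simp
  moreover have "2 * a' \<in> Ii 1" using two_I h by simp
  ultimately have "(a - a') + 2 * a' \<in> Ii 1" by (rule I_add)
  then have "(a - a') * ((a - a') + 2 * a') \<in> Ii (Suc m + 1)" by (rule I_mult[OF h(3)])
  then show ?thesis using e by simp
qed

lemma B_diff: assumes "a \<in> Oo" "b \<in> Oo" "c \<in> Oo" "a' \<in> Oo" "b' \<in> Oo" "c' \<in> Oo"
  "a - a' \<in> Ii m" "b - b' \<in> Ii m" "c - c' \<in> Ii m"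
  shows "Bf (a,b,c) - Bf (a',b',c') \<in> Ii m"
proof -
  have e: "Bf (a,b,c) - Bf (a',b',c') = (a^2 - a'^2) - (1+2*ua)*(b^2 - b'^2) - (1+2*wb)*(c^2 - c'^2)"
    by (simp add: algebra_simps)
  have A: "a^2 - a'^2 \<in> Ii m" and B: "b^2 - b'^2 \<in> Ii m" and C: "c^2 - c'^2 \<in> Ii m" using sqdiff assms by auto
  have B': "(1+2*ua)*(b^2 - b'^2) \<in> Ii m" using B by simp
  have C': "(1+2*wb)*(c^2 - c'^2) \<in> Ii m" using C by simp
  show ?thesis unfolding e by (rule I_diff[OF I_diff[OF A B'] C'])
qed

lemma B_diff1: assumes "a \<in> Oo" "b \<in> Oo" "c \<in> Oo" "a' \<in> Oo" "b' \<in> Oo" "c' \<in> Oo"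
  "a - a' \<in> Ii (Suc m)" "b - b' \<in> Ii (Suc m)" "c - c' \<in> Ii (Suc m)"
  shows "Bf (a,b,c) - Bf (a',b',c') \<in> Ii (Suc (Suc m))"
proof -
  have e: "Bf (a,b,c) - Bf (a',b',c') = (a^2 - a'^2) - (1+2*ua)*(b^2 - b'^2) - (1+2*wb)*(c^2 - c'^2)"
    by (simp add: algebra_simps)
  have A: "a^2 - a'^2 \<in> Ii (Suc (Suc m))" and B: "b^2 - b'^2 \<in> Ii (Suc (Suc m))" and C: "c^2 - c'^2 \<in> Ii (Suc (Suc m))"
    using sqdiff1 assms by auto
  have B': "(1+2*ua)*(b^2 - b'^2) \<in> Ii (Suc (Suc m))" using B by simp
  have C': "(1+2*wb)*(c^2 - c'^2) \<in> Ii (Suc (Suc m))" using C by simp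
  show ?thesis unfolding e by (rule I_diff[OF I_diff[OF A B'] C'])
qed

lemma cong_iff2: assumes d: "X - Y \<in> Ii m" shows "(X - \<rho> \<in> Ii m) = (Y - \<rho> \<in> Ii m)"
proof
  assume "X - \<rho> \<in> Ii m"
  then have "(X - \<rho>) - (X - Y) \<in> Ii m" using d by (rule I_diff)
  then show "Y - \<rho> \<in> Ii m" by simp
next
  assume "Y - \<rho> \<in> Ii m"
  then have "(Y - \<rho>) + (X - Y) \<in> Ii m" using d by (rule I_add)
  then show "X - \<rho> \<in> Ii m" by simp
qed

lemma inv_P: "inv3 m (\<lambda>x. Bf x - \<rho> \<in> Ii m)"
  unfolding inv3_def
proof (intro allI impI)
  fix a b c a' b' c' :: 'k
  assume h: "a \<in> Oo" "b \<in> Oo" "c \<in> Oo" "a' \<in> Oo" "b' \<in> Oo" "c' \<in> Oo" "a - a' \<in> Ii m" "b - b' \<in> Ii m" "c - c' \<in> Ii m"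
  have d: "Bf (a,b,c) - Bf (a',b',c') \<in> Ii m" using B_diff[OF h] .
  show "(Bf (a,b,c) - \<rho> \<in> Ii m) = (Bf (a',b',c') - \<rho> \<in> Ii m)" using cong_iff2[OF d] .
qed

lemma inv_P1: "inv3 (Suc m) (\<lambda>x. Bf x - \<rho> \<in> Ii (Suc (Suc m)))"
  unfolding inv3_def
proof (intro allI impI)
  fix a b c a' b' c' :: 'k
  assume h: "a \<in> Oo" "b \<in> Oo" "c \<in> Oo" "a' \<in> Oo" "b' \<in> Oo" "c' \<in> Oo" "a - a' \<in> Ii (Suc m)" "b - b' \<in> Ii (Suc m)" "c - c' \<in> Ii (Suc m)"
  have d: "Bf (a,b,c) - Bf (a',b',c') \<in> Ii (Suc (Suc m))" using B_diff1[OF h] .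
  show "(Bf (a,b,c) - \<rho> \<in> Ii (Suc (Suc m))) = (Bf (a',b',c') - \<rho> \<in> Ii (Suc (Suc m)))" using cong_iff2[OF d] .
qed

lemma eight_minus: "- (1::'k) \<notin> Ii 3"
proof
  assume "- (1::'k) \<in> Ii 3"
  then have "(1::'k) \<in> Ii 3" by simp
  then show False using I_mono[of 1 3 1] by simp
qed

lemma noapprox1:
  assumes y: "y0 \<in> Oo" "y1 \<in> Oo" "y2 \<in> Oo" and u1: "unit y1" and B: "Bf (y0,y1,y2) \<in> Ii 3"
  shows False
proof -
  define D where "D = (1+2*ua)*y1^2"
  have Du: "unit D" unfolding D_def power2_eq_square by (intro unit_mult unit_1plus2 u1) simp
  define W where "W = (y0^2 - (1+2*wb)*y2^2) / D"
  have DW: "D * W = y0^2 - (1+2*wb)*y2^2" using unit_nz[OF Du] by (simp add: W_def)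
  obtain d where d: "d \<in> Oo" "Bf (y0,y1,y2) = 2^3 * d" using I_elim[OF B] by auto
  have "W - 1 = Bf (y0,y1,y2) / D" using unit_nz[OF Du] by (simp add: W_def D_def field_simps)
  also have "\<dots> = 2^3 * (d / D)" using d by simp
  finally have W1: "W - 1 \<in> Ii 3" using unit_div_O[OF Du d(1)] pow2_I by metis
  have WO: "W \<in> Oo" using W1 I_sub_O by (metis O_add O_1 diff_add_cancel)
  obtain z where z: "z^2 = W" using sqrt_lemma[OF WO W1] by auto
  have "y0^2 - (1+2*ua)*(z*y1)^2 - (1+2*wb)*y2^2 = 0"
    using DW z unfolding D_def by (simp add: power_mult_distrib algebra_simps)
  then have "z * y1 = 0" using aniso by blast
  then have "z = 0" using unit_nz[OF u1] by simp
  then have "W = 0" using z by simp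
  then show False using W1 eight_minus by simp
qed

lemma noapprox2:
  assumes y: "y0 \<in> Oo" "y1 \<in> Oo" "y2 \<in> Oo" and u2: "unit y2" and B: "Bf (y0,y1,y2) \<in> Ii 3"
  shows False
proof -
  define D where "D = (1+2*wb)*y2^2"
  have Du: "unit D" unfolding D_def power2_eq_square by (intro unit_mult unit_1plus2 u2) simp
  define W where "W = (y0^2 - (1+2*ua)*y1^2) / D"
  have DW: "D * W = y0^2 - (1+2*ua)*y1^2" using unit_nz[OF Du] by (simp add: W_def)
  obtain d where d: "d \<in> Oo" "Bf (y0,y1,y2) = 2^3 * d" using I_elim[OF B] by auto
  have "W - 1 = Bf (y0,y1,y2) / D" using unit_nz[OF Du] by (simp add: W_def D_def field_simps)
  also have "\<dots> = 2^3 * (d / D)" using d by simp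
  finally have W1: "W - 1 \<in> Ii 3" using unit_div_O[OF Du d(1)] pow2_I by metis
  have WO: "W \<in> Oo" using W1 I_sub_O by (metis O_add O_1 diff_add_cancel)
  obtain z where z: "z^2 = W" using sqrt_lemma[OF WO W1] by auto
  have "y0^2 - (1+2*ua)*y1^2 - (1+2*wb)*(z*y2)^2 = 0"
    using DW z unfolding D_def by (simp add: power_mult_distrib algebra_simps)
  then have "z * y2 = 0" using aniso by blast
  then have "z = 0" using unit_nz[OF u2] by simp
  then have "W = 0" using z by simp
  then show False using W1 eight_minus by simp
qed

end


context dyadB begin

lemma I_num: "Ii (Suc 0) = Ii 1" "Ii (Suc (Suc 0)) = Ii 2" "Ii (Suc (Suc (Suc 0))) = Ii 3"
  by (simp_all add: numeral_2_eq_2 numeral_3_eq_3)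

lemma two_mult_I2: "2 * y \<in> Ii 2 \<longleftrightarrow> y \<in> Ii 1"
  using two_nz by (cases "y=0") (auto simp: memI vmult v2)
lemma two_mult_I3: "2 * y \<in> Ii 3 \<longleftrightarrow> y \<in> Ii 2"
  using two_nz by (cases "y=0") (auto simp: memI vmult v2)
lemma four_mult_I3: "4 * y \<in> Ii 3 \<longleftrightarrow> y \<in> Ii 1"
proof -
  have "val (4::'k) = 2" using v2pow[of 2] by simp
  moreover have "(4::'k) \<noteq> 0" using two_nz by (metis mult_eq_0_iff numeral_Bit0_eq_double)
  ultimately show ?thesis by (cases "y=0") (auto simp: memI vmult)
qed

lemma Qf_O[simp]: "g1 \<in> Oo \<Longrightarrow> g2 \<in> Oo \<Longrightarrow> Qf g1 g2 \<in> Oo"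
  by (simp add: Qf_def)

lemma aniso_mod2:
  assumes g: "g1 \<in> Oo" "g2 \<in> Oo" and Q: "Qf g1 g2 \<in> Ii 1"
  shows "g1 \<in> Ii 1 \<and> g2 \<in> Ii 1"
proof (rule ccontr)
  assume nn: "\<not> (g1 \<in> Ii 1 \<and> g2 \<in> Ii 1)"
  obtain h where h: "h \<in> Oo" "Qf g1 g2 = 2^1 * h" using I_elim[OF Q] by blast
  show False
  proof (cases "g1 \<in> Ii 1")
    case False
    then have u1: "unit g1" using g by (simp add: unit_def)
    define den where "den = g1 + 2*((1+wb)*g2)"
    have "den - g1 \<in> Ii 1" unfolding den_def using g two_I by simp
    then have du: "unit den" using unit_cong[OF u1] g by (simp add: den_def)
    define e0 where "e0 = h / den"
    have e0O: "e0 \<in> Oo" unfolding e0_def using unit_div_O[OF du h(1)] .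
    have e0d: "e0 * den = h" unfolding e0_def using unit_nz[OF du] by simp
    have "Bf (g1+g2+2*e0, g1, g2 - 2*e0) = -2 * Qf g1 g2 + 4*(e0*den) - 8*wb*e0^2"
      unfolding den_def Qf_def by (simp add: algebra_simps power2_eq_square)
    also have "\<dots> = 2^3 * (-(wb*e0^2))" using h e0d by simp
    finally have X: "Bf (g1+g2+2*e0, g1, g2 - 2*e0) = 2^3 * (-(wb*e0^2))" .
    have Y: "Bf (g1+g2+2*e0, g1, g2 - 2*e0) \<in> Ii 3" unfolding X using e0O by (intro pow2_I) simp
    have "g1+g2+2*e0 \<in> Oo" "g2 - 2*e0 \<in> Oo" using g e0O by auto
    then show False using noapprox1[OF _ g(1) _ u1 Y] by blast
  next
    case True
    then have "g2 \<notin> Ii 1" using nn by simp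
    then have u2: "unit g2" using g by (simp add: unit_def)
    define den where "den = g2 + 2*((1+ua)*g1)"
    have "den - g2 \<in> Ii 1" unfolding den_def using g two_I by simp
    then have du: "unit den" using unit_cong[OF u2] g by (simp add: den_def)
    define e0 where "e0 = h / den"
    have e0O: "e0 \<in> Oo" unfolding e0_def using unit_div_O[OF du h(1)] .
    have e0d: "e0 * den = h" unfolding e0_def using unit_nz[OF du] by simp
    have "Bf (g1+g2+2*e0, g1 - 2*e0, g2) = -2 * Qf g1 g2 + 4*(e0*den) - 8*ua*e0^2"
      unfolding den_def Qf_def by (simp add: algebra_simps power2_eq_square)
    also have "\<dots> = 2^3 * (-(ua*e0^2))" using h e0d by simp
    finally have X: "Bf (g1+g2+2*e0, g1 - 2*e0, g2) = 2^3 * (-(ua*e0^2))" .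
    have Y: "Bf (g1+g2+2*e0, g1 - 2*e0, g2) \<in> Ii 3" unfolding X using e0O by (intro pow2_I) simp
    have "g1+g2+2*e0 \<in> Oo" "g1 - 2*e0 \<in> Oo" using g e0O by auto
    then show False using noapprox2[OF _ _ g(2) u2 Y] by blast
  qed
qed

lemma C1:
  assumes abc: "a \<in> Oo" "b \<in> Oo" "c \<in> Oo" and B: "Bf (a,b,c) \<in> Ii 2"
  shows "a \<in> Ii 1 \<and> b \<in> Ii 1 \<and> c \<in> Ii 1"
proof -
  define W where "W = -(1+ua)*b^2 - (1+wb)*c^2 - a*b - a*c - b*c"
  have WO: "W \<in> Oo" unfolding W_def using abc by simp
  have e1: "(a+b+c)*(a+b+c) = Bf (a,b,c) - 2*W" unfolding W_def by (simp add: algebra_simps power2_eq_square)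
  have "Bf (a,b,c) \<in> Ii 1" using B I_mono[of 1 2] by simp
  moreover have "2*W \<in> Ii 1" using two_I WO by simp
  ultimately have "(a+b+c)*(a+b+c) \<in> Ii 1" unfolding e1 by (rule I_diff)
  then have s: "a+b+c \<in> Ii 1" by (rule I_sq)
  define f0 where "f0 = a - b - c"
  have fe: "f0 = (a+b+c) - 2*(b+c)" unfolding f0_def by simp
  have "2*(b+c) \<in> Ii 1" using two_I abc by simp
  then have "(a+b+c) - 2*(b+c) \<in> Ii 1" using s by (intro I_diff)
  then have f0: "f0 \<in> Ii 1" unfolding fe .
  have e2: "2 * Qf b c = f0*f0 + 2*f0*(b+c) - Bf (a,b,c)"
    unfolding f0_def Qf_def by (simp add: algebra_simps power2_eq_square)
  have F1: "f0*f0 \<in> Ii 2" using I_mult[OF f0 f0, unfolded one_add_one] .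
  have "2*f0 \<in> Ii 2" using I_mult[OF two_I1 f0, unfolded one_add_one] .
  then have F2: "2*f0*(b+c) \<in> Ii 2" using abc by simp
  have "f0*f0 + 2*f0*(b+c) - Bf (a,b,c) \<in> Ii 2" by (rule I_diff[OF I_add[OF F1 F2] B])
  then have "2 * Qf b c \<in> Ii 2" unfolding e2 .
  then have "Qf b c \<in> Ii 1" using two_mult_I2 by blast
  then have bc: "b \<in> Ii 1 \<and> c \<in> Ii 1" using aniso_mod2 abc by blast
  have "a = f0 + b + c" unfolding f0_def by simp
  then have "a \<in> Ii 1" using f0 bc by simp
  then show ?thesis using bc by simp
qed

end


context dyad begin

lemma cong_iff0: assumes d: "X - Y \<in> Ii m" shows "(X \<in> Ii m) = (Y \<in> Ii m)"
proof
  assume "X \<in> Ii m"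
  then have "X - (X - Y) \<in> Ii m" using d by (rule I_diff)
  then show "Y \<in> Ii m" by simp
next
  assume "Y \<in> Ii m"
  then have "Y + (X - Y) \<in> Ii m" using d by (rule I_add)
  then show "X \<in> Ii m" by simp
qed

lemma R_O: "r \<in> R \<Longrightarrow> r \<in> Oo" using R_sub by blast

lemma sq_inj1: "r \<in> Oo \<Longrightarrow> r' \<in> Oo \<Longrightarrow> r^2 - r'^2 \<in> Ii 1 \<Longrightarrow> r - r' \<in> Ii 1"
proof -
  assume h: "r \<in> Oo" "r' \<in> Oo" "r^2 - r'^2 \<in> Ii 1"
  have e: "(r - r') * (r - r') = (r^2 - r'^2) - 2 * (r' * (r - r'))" by (simp add: algebra_simps power2_eq_square)
  have "2 * (r' * (r - r')) \<in> Ii 1" using h two_I by simp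
  then have "(r - r') * (r - r') \<in> Ii 1" unfolding e by (rule I_diff[OF h(3)])
  then show ?thesis by (rule I_sq)
qed

lemma sqR: "c \<in> Oo \<Longrightarrow> \<exists>!r. r \<in> R \<and> r^2 - c \<in> Ii 1"
proof -
  assume c: "c \<in> Oo"
  define f where "f r = rep1 (r^2)" for r
  have fR: "f ` R \<subseteq> R" unfolding f_def using rep1 R_O by auto
  have inj: "inj_on f R"
  proof (rule inj_onI)
    fix r r' assume r: "r \<in> R" "r' \<in> R" and e: "f r = f r'"
    have "r^2 - rep1 (r^2) \<in> Ii 1" "r'^2 - rep1 (r'^2) \<in> Ii 1" using rep1 R_O r by auto
    then have "r^2 - r'^2 \<in> Ii 1" using e unfolding f_def by (metis I_sym[of "r'^2"] I_trans[of "r^2"])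
    then have "r - r' \<in> Ii 1" using sq_inj1 R_O r by blast
    then show "r = r'" using R_un r by blast
  qed
  have "f ` R = R" using endo_inj_surj[OF R_fin fR inj] .
  moreover have "rep1 c \<in> R" "c - rep1 c \<in> Ii 1" using rep1[OF c] by auto
  ultimately obtain r where r: "r \<in> R" "rep1 (r^2) = rep1 c" unfolding f_def by force
  have r2: "r^2 \<in> Oo" using R_O[OF r(1)] by simp
  have A: "r^2 - rep1 (r^2) \<in> Ii 1" using rep1[OF r2] by (rule conjunct2)
  have B: "c - rep1 c \<in> Ii 1" using rep1[OF c] by auto
  have "r^2 - c = (r^2 - rep1 (r^2)) - (c - rep1 c)" using r(2) by simp
  then have ex: "r^2 - c \<in> Ii 1" using I_diff[OF A B] by simp
  show ?thesis
  proof (rule ex1I[of _ r])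
    show "r \<in> R \<and> r^2 - c \<in> Ii 1" using r ex by simp
    fix r' assume r': "r' \<in> R \<and> r'^2 - c \<in> Ii 1"
    then have "r'^2 - r^2 \<in> Ii 1" using ex by (metis I_sym[of "r^2"] I_trans[of "r'^2"])
    then have "r' - r \<in> Ii 1" using sq_inj1 R_O r r' by blast
    then show "r' = r" using R_un r r' by blast
  qed
qed

lemma lin_unique: "unit l \<Longrightarrow> H \<in> Oo \<Longrightarrow> \<exists>!a. a \<in> R \<and> l * a + H \<in> Ii 1"
proof -
  assume l: "unit l" and H: "H \<in> Oo"
  define x where "x = - H / l"
  have xO: "x \<in> Oo" unfolding x_def using unit_div_O[OF l] H by simp
  have lx: "l * x + H = 0" unfolding x_def using unit_nz[OF l] by simp
  define a where "a = rep1 x"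
  have a: "a \<in> R" "x - a \<in> Ii 1" using rep1[OF xO] a_def by auto
  have "l * a + H = - (l * (x - a))" using lx by (simp add: algebra_simps)
  moreover have "l * (x - a) \<in> Ii 1" using a(2) unit_O[OF l] by simp
  ultimately have ex: "l * a + H \<in> Ii 1" by simp
  show ?thesis
  proof (rule ex1I[of _ a])
    show "a \<in> R \<and> l * a + H \<in> Ii 1" using a ex by simp
    fix b assume b: "b \<in> R \<and> l * b + H \<in> Ii 1"
    have e: "l * (b - a) = (l * b + H) - (l * a + H)" by (simp add: algebra_simps)
    have "(l * b + H) - (l * a + H) \<in> Ii 1" by (rule I_diff) (use b ex in auto)
    then have "l * (b - a) \<in> Ii 1" unfolding e .
    then have "b - a \<in> Ii 1" using unit_mult_I[OF l] by blast
    then show "b = a" using R_un a b by blast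
  qed
qed

lemma cnt_u0: assumes U: "\<And>b c. b \<in> R \<Longrightarrow> c \<in> R \<Longrightarrow> \<exists>!a. a \<in> R \<and> P (a,b,c)"
  shows "card {x \<in> S3 R. P x} = q^2"
proof -
  define g where "g b c = (THE a. a \<in> R \<and> P (a,b,c))" for b c
  have g: "g b c \<in> R \<and> P (g b c, b, c)" if "b \<in> R" "c \<in> R" for b c
    unfolding g_def using theI'[OF U[OF that]] .
  have "bij_betw (\<lambda>x. (fst (snd x), snd (snd x))) {x \<in> S3 R. P x} (R \<times> R)"
  proof (rule bij_betwI')
    fix x y assume x: "x \<in> {x \<in> S3 R. P x}" and y: "y \<in> {x \<in> S3 R. P x}"
    obtain a b c where xa: "x = (a,b,c)" by (cases x) auto
    obtain a' b' c' where ya: "y = (a',b',c')" by (cases y) auto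
    show "((fst (snd x), snd (snd x)) = (fst (snd y), snd (snd y))) = (x = y)"
    proof
      assume e: "(fst (snd x), snd (snd x)) = (fst (snd y), snd (snd y))"
      then have bb: "b' = b" "c' = c" using xa ya by auto
      have "a \<in> R \<and> P (a,b,c)" "a' \<in> R \<and> P (a',b,c)" using x y xa ya bb by auto
      then have "a = a'" using U[of b c] x xa by auto
      then show "x = y" using xa ya bb by simp
    qed simp
  next
    fix x assume "x \<in> {x \<in> S3 R. P x}"
    then show "(fst (snd x), snd (snd x)) \<in> R \<times> R" by (cases x) auto
  next
    fix y assume y: "y \<in> R \<times> R"
    obtain b c where bc: "y = (b,c)" by (cases y) auto
    have "(g b c, b, c) \<in> {x \<in> S3 R. P x}" using g y bc by auto
    then show "\<exists>x\<in>{x \<in> S3 R. P x}. y = (fst (snd x), snd (snd x))" using bc by force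
  qed
  then have "card {x \<in> S3 R. P x} = card (R \<times> R)" by (rule bij_betw_same_card)
  then show ?thesis using R_cardq by (simp add: card_cartesian_product power2_eq_square)
qed

lemma cnt_u1: assumes U: "\<And>a c. a \<in> R \<Longrightarrow> c \<in> R \<Longrightarrow> \<exists>!b. b \<in> R \<and> P (a,b,c)"
  shows "card {x \<in> S3 R. P x} = q^2"
proof -
  define g where "g a c = (THE b. b \<in> R \<and> P (a,b,c))" for a c
  have g: "g a c \<in> R \<and> P (a, g a c, c)" if "a \<in> R" "c \<in> R" for a c
    unfolding g_def using theI'[OF U[OF that]] .
  have "bij_betw (\<lambda>x. (fst x, snd (snd x))) {x \<in> S3 R. P x} (R \<times> R)"
  proof (rule bij_betwI')
    fix x y assume x: "x \<in> {x \<in> S3 R. P x}" and y: "y \<in> {x \<in> S3 R. P x}"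
    obtain a b c where xa: "x = (a,b,c)" by (cases x) auto
    obtain a' b' c' where ya: "y = (a',b',c')" by (cases y) auto
    show "((fst x, snd (snd x)) = (fst y, snd (snd y))) = (x = y)"
    proof
      assume e: "(fst x, snd (snd x)) = (fst y, snd (snd y))"
      then have bb: "a' = a" "c' = c" using xa ya by auto
      have "b \<in> R \<and> P (a,b,c)" "b' \<in> R \<and> P (a,b',c)" using x y xa ya bb by auto
      then have "b = b'" using U[of a c] x xa by auto
      then show "x = y" using xa ya bb by simp
    qed simp
  next
    fix x assume "x \<in> {x \<in> S3 R. P x}"
    then show "(fst x, snd (snd x)) \<in> R \<times> R" by (cases x) auto
  next
    fix y assume y: "y \<in> R \<times> R"
    obtain a c where bc: "y = (a,c)" by (cases y) auto
    have "(a, g a c, c) \<in> {x \<in> S3 R. P x}" using g y bc by auto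
    then show "\<exists>x\<in>{x \<in> S3 R. P x}. y = (fst x, snd (snd x))" using bc by force
  qed
  then have "card {x \<in> S3 R. P x} = card (R \<times> R)" by (rule bij_betw_same_card)
  then show ?thesis using R_cardq by (simp add: card_cartesian_product power2_eq_square)
qed

lemma cnt_u2: assumes U: "\<And>a b. a \<in> R \<Longrightarrow> b \<in> R \<Longrightarrow> \<exists>!c. c \<in> R \<and> P (a,b,c)"
  shows "card {x \<in> S3 R. P x} = q^2"
proof -
  define g where "g a b = (THE c. c \<in> R \<and> P (a,b,c))" for a b
  have g: "g a b \<in> R \<and> P (a, b, g a b)" if "a \<in> R" "b \<in> R" for a b
    unfolding g_def using theI'[OF U[OF that]] .
  have "bij_betw (\<lambda>x. (fst x, fst (snd x))) {x \<in> S3 R. P x} (R \<times> R)"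
  proof (rule bij_betwI')
    fix x y assume x: "x \<in> {x \<in> S3 R. P x}" and y: "y \<in> {x \<in> S3 R. P x}"
    obtain a b c where xa: "x = (a,b,c)" by (cases x) auto
    obtain a' b' c' where ya: "y = (a',b',c')" by (cases y) auto
    show "((fst x, fst (snd x)) = (fst y, fst (snd y))) = (x = y)"
    proof
      assume e: "(fst x, fst (snd x)) = (fst y, fst (snd y))"
      then have bb: "a' = a" "b' = b" using xa ya by auto
      have "c \<in> R \<and> P (a,b,c)" "c' \<in> R \<and> P (a,b,c')" using x y xa ya bb by auto
      then have "c = c'" using U[of a b] x xa by auto
      then show "x = y" using xa ya bb by simp
    qed simp
  next
    fix x assume "x \<in> {x \<in> S3 R. P x}"
    then show "(fst x, fst (snd x)) \<in> R \<times> R" by (cases x) auto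
  next
    fix y assume y: "y \<in> R \<times> R"
    obtain a b where bc: "y = (a,b)" by (cases y) auto
    have "(a, b, g a b) \<in> {x \<in> S3 R. P x}" using g y bc by auto
    then show "\<exists>x\<in>{x \<in> S3 R. P x}. y = (fst x, fst (snd x))" using bc by force
  qed
  then have "card {x \<in> S3 R. P x} = card (R \<times> R)" by (rule bij_betw_same_card)
  then show ?thesis using R_cardq by (simp add: card_cartesian_product power2_eq_square)
qed

end


context dyadB begin

lemma K1: assumes rho: "\<rho> \<in> Oo" shows "cnt 1 (\<lambda>x. Bf x - \<rho> \<in> Ii 1) = q^2"
proof -
  have "card {x \<in> S3 R. Bf x - \<rho> \<in> Ii 1} = q^2"
  proof (rule cnt_u0)
    fix b c assume bc: "b \<in> R" "c \<in> R"
    define C where "C = \<rho> + (1+2*ua)*b^2 + (1+2*wb)*c^2"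
    have CO: "C \<in> Oo" unfolding C_def using rho bc R_O by simp
    have e: "\<And>a. Bf (a,b,c) - \<rho> = a^2 - C" unfolding C_def by (simp add: algebra_simps)
    show "\<exists>!a. a \<in> R \<and> Bf (a,b,c) - \<rho> \<in> Ii 1" unfolding e using sqR[OF CO] .
  qed
  then show ?thesis unfolding cnt_def Rep_1 .
qed

lemma all_I1_Bf: "a \<in> Ii 1 \<Longrightarrow> b \<in> Ii 1 \<Longrightarrow> c \<in> Ii 1 \<Longrightarrow> Bf (a,b,c) \<in> Ii 2"
proof -
  assume h: "a \<in> Ii 1" "b \<in> Ii 1" "c \<in> Ii 1"
  have A: "a*a \<in> Ii 2" "b*b \<in> Ii 2" "c*c \<in> Ii 2"
    using I_mult[OF h(1) h(1), unfolded one_add_one] I_mult[OF h(2) h(2), unfolded one_add_one]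
      I_mult[OF h(3) h(3), unfolded one_add_one] by auto
  have B: "(1+2*ua)*(b*b) \<in> Ii 2" "(1+2*wb)*(c*c) \<in> Ii 2" using A by simp_all
  have "Bf (a,b,c) = a*a - (1+2*ua)*(b*b) - (1+2*wb)*(c*c)" by (simp add: power2_eq_square)
  then show ?thesis using I_diff[OF I_diff[OF A(1) B(1)] B(2)] by simp
qed

lemma K3: assumes rho: "\<rho> \<in> Ii 2" shows "cnt 2 (\<lambda>x. Bf x - \<rho> \<in> Ii 2) = q^3"
proof -
  define Z where "Z x \<longleftrightarrow> fst x \<in> Ii 1 \<and> fst (snd x) \<in> Ii 1 \<and> snd (snd x) \<in> Ii 1" for x :: "'k \<times> 'k \<times> 'k"
  have eqv: "(Bf x - \<rho> \<in> Ii 2) = Z x" if x: "x \<in> O3" for x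
  proof -
    obtain a b c where abc: "x = (a,b,c)" by (cases x) auto
    have O: "a \<in> Oo" "b \<in> Oo" "c \<in> Oo" using x abc by auto
    have "(Bf x - \<rho> \<in> Ii 2) = (Bf x \<in> Ii 2)" using cong_iff0[of "Bf x - \<rho>" "Bf x" 2] rho by simp
    also have "\<dots> = Z x" unfolding Z_def abc using C1[OF O] all_I1_Bf by auto
    finally show ?thesis .
  qed
  have "cnt 2 (\<lambda>x. Bf x - \<rho> \<in> Ii 2) = cnt 2 Z"
    unfolding cnt_def using eqv S3_O3 by (intro arg_cong[where f=card] Collect_cong) blast
  also have "inv3 1 Z" unfolding inv3_def Z_def
  proof (intro allI impI)
    fix a b c a' b' c' :: 'k
    assume h: "a \<in> Oo" "b \<in> Oo" "c \<in> Oo" "a' \<in> Oo" "b' \<in> Oo" "c' \<in> Oo" "a - a' \<in> Ii 1" "b - b' \<in> Ii 1" "c - c' \<in> Ii 1"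
    show "(fst (a, b, c) \<in> Ii 1 \<and> fst (snd (a, b, c)) \<in> Ii 1 \<and> snd (snd (a, b, c)) \<in> Ii 1) =
          (fst (a', b', c') \<in> Ii 1 \<and> fst (snd (a', b', c')) \<in> Ii 1 \<and> snd (snd (a', b', c')) \<in> Ii 1)"
      using cong_iff0[OF h(7)] cong_iff0[OF h(8)] cong_iff0[OF h(9)] by simp
  qed
  then have "cnt (1+1) Z = q^(3*1) * cnt 1 Z" by (rule cnt_refine)
  then have "cnt 2 Z = q^3 * cnt 1 Z" unfolding one_add_one mult_1_right .
  also have "cnt 1 Z = 1"
  proof -
    have "{x \<in> S3 (Rep 1). Z x} = {(0,0,0)}"
      unfolding Rep_1 Z_def using R_zero_iff R_0 by (auto simp: S3_def)
    then show ?thesis unfolding cnt_def by simp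
  qed
  finally show ?thesis by simp
qed

lemma K4: assumes rho: "\<rho> \<in> Oo"
  shows "cnt (Suc (Suc (Suc k))) (\<lambda>x. Bf x - 4*\<rho> \<in> Ii (Suc (Suc (Suc k))))
       = q^3 * cnt (Suc k) (\<lambda>x. Bf x - \<rho> \<in> Ii (Suc k))"
proof -
  let ?P = "\<lambda>x. Bf x - 4*\<rho> \<in> Ii (Suc (Suc (Suc k)))"
  let ?P' = "\<lambda>x. Bf x - \<rho> \<in> Ii (Suc k)"
  have dec: "cnt (1 + Suc (Suc k)) ?P = (\<Sum>s\<in>S3 (Rep 1). card {t \<in> S3 (Rep (Suc (Suc k))). ?P (cmb3 1 s t)})"
    using cnt_decomp[of 1 "Suc (Suc k)" ?P] inv_P by simp
  have ref: "cnt (Suc k + 1) ?P' = q^(3*1) * cnt (Suc k) ?P'"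
    using cnt_refine[of "Suc k" ?P' 1] inv_P by simp
  have inner: "card {t \<in> S3 (Rep (Suc (Suc k))). ?P (cmb3 1 s t)} =
      (if s = (0,0,0) then q^3 * cnt (Suc k) ?P' else 0)" if s: "s \<in> S3 (Rep 1)" for s
  proof (cases "s = (0,0,0)")
    case True
    have "?P (cmb3 1 s t) = ?P' t" for t
    proof -
      obtain a b c where abc: "t = (a,b,c)" by (cases t) auto
      have E: "Bf (cmb3 1 s t) - 4*\<rho> = 4 * (Bf t - \<rho>)" using True abc by (simp add: algebra_simps power2_eq_square)
      show ?thesis unfolding E by (rule four_mult_I)
    qed
    then have "card {t \<in> S3 (Rep (Suc (Suc k))). ?P (cmb3 1 s t)} = cnt (Suc k + 1) ?P'"
      unfolding cnt_def by simp
    then show ?thesis using True ref by simp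
  next
    case False
    obtain a b c where abc: "s = (a,b,c)" by (cases s) auto
    have "\<not> ?P (cmb3 1 s t)" if t: "t \<in> S3 (Rep (Suc (Suc k)))" for t
    proof
      assume P: "?P (cmb3 1 s t)"
      obtain a' b' c' where abc': "t = (a',b',c')" by (cases t) auto
      have O: "a \<in> R" "b \<in> R" "c \<in> R" "a' \<in> Oo" "b' \<in> Oo" "c' \<in> Oo" using s t abc abc' S3_O3[OF t] Rep_1 by auto
      have OO: "a + 2*a' \<in> Oo" "b + 2*b' \<in> Oo" "c + 2*c' \<in> Oo" using O R_O by auto
      have "Bf (cmb3 1 s t) - 4*\<rho> \<in> Ii 2" using P I_mono[of 2 "Suc (Suc (Suc k))"] by simp
      moreover have "4*\<rho> \<in> Ii 2" using four_I rho by simp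
      ultimately have "(Bf (cmb3 1 s t) - 4*\<rho>) + 4*\<rho> \<in> Ii 2" by (rule I_add)
      then have "Bf (a + 2*a', b + 2*b', c + 2*c') \<in> Ii 2" using abc abc' by simp
      then have h: "a + 2*a' \<in> Ii 1" "b + 2*b' \<in> Ii 1" "c + 2*c' \<in> Ii 1" using C1[OF OO] by auto
      have "a \<in> Ii 1" using I_diff[OF h(1) two_I[OF O(4)]] by simp
      moreover have "b \<in> Ii 1" using I_diff[OF h(2) two_I[OF O(5)]] by simp
      moreover have "c \<in> Ii 1" using I_diff[OF h(3) two_I[OF O(6)]] by simp
      ultimately have "s = (0,0,0)" using R_zero_iff O abc by simp
      then show False using False by simp
    qed
    then have E: "{t \<in> S3 (Rep (Suc (Suc k))). ?P (cmb3 1 s t)} = {}" by blast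
    show ?thesis unfolding E using False by simp
  qed
  have z: "(0,0,0) \<in> S3 (Rep 1)" using R_0 Rep_1 by simp
  have "cnt (Suc (Suc (Suc k))) ?P = (\<Sum>s\<in>S3 (Rep 1). (if s = (0,0,0) then q^3 * cnt (Suc k) ?P' else 0))"
    using dec inner by simp
  also have "\<dots> = q^3 * cnt (Suc k) ?P'" using z by (simp add: sum.delta[OF S3_Rep[THEN conjunct1]] del: Rep.simps)
  finally show ?thesis .
qed

lemma K5: assumes t: "unit t"
  shows "cnt m (\<lambda>x. Bf x - t^2 \<in> Ii m) = cnt m (\<lambda>x. Bf x - 1 \<in> Ii m)"
proof -
  let ?P = "\<lambda>x. Bf x - t^2 \<in> Ii m"
  define f where "f x = (t * fst x, t * fst (snd x), t * snd (snd x))" for x :: "'k \<times> 'k \<times> 'k"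
  define h where "h x = (inverse t * fst x, inverse t * fst (snd x), inverse t * snd (snd x))" for x :: "'k \<times> 'k \<times> 'k"
  have tO: "t \<in> Oo" and tiO: "inverse t \<in> Oo" and tnz: "t \<noteq> 0" using t unit_inv[OF t] by (auto simp: unit_def unit_nz)
  have "card {x\<in>S3 (Rep m). ?P (f x)} = card {y\<in>S3 (Rep m). ?P y}"
  proof (rule cov3[OF crs_Rep crs_Rep])
    show "\<And>x. x \<in> O3 \<Longrightarrow> f x \<in> O3" unfolding f_def O3_def using tO by auto
    show "\<And>x. x \<in> O3 \<Longrightarrow> h x \<in> O3" unfolding h_def O3_def using tiO by auto
    show "\<And>x. x \<in> O3 \<Longrightarrow> h (f x) = x" unfolding f_def h_def using tnz by auto
    show "\<And>x. x \<in> O3 \<Longrightarrow> f (h x) = x" unfolding f_def h_def using tnz by auto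
    show "\<And>x y. x \<in> O3 \<Longrightarrow> y \<in> O3 \<Longrightarrow> tc m x y \<Longrightarrow> tc m (f x) (f y)"
      unfolding f_def tc_def using tO by (auto simp: right_diff_distrib[symmetric])
    show "\<And>x y. x \<in> O3 \<Longrightarrow> y \<in> O3 \<Longrightarrow> tc m x y \<Longrightarrow> tc m (h x) (h y)"
      unfolding h_def tc_def using tiO by (auto simp: right_diff_distrib[symmetric])
    show "inv3 m ?P" by (rule inv_P)
  qed
  moreover have "?P (f x) = (Bf x - 1 \<in> Ii m)" for x
  proof -
    obtain a b c where abc: "x = (a,b,c)" by (cases x) auto
    have "Bf (f x) - t^2 = (t*t) * (Bf x - 1)" unfolding f_def abc by (simp add: algebra_simps power2_eq_square)
    moreover have "unit (t*t)" using unit_mult[OF t t] .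
    ultimately show ?thesis using unit_mult_I by simp
  qed
  ultimately show ?thesis unfolding cnt_def by simp
qed

end


context dyadB begin

definition pc :: "'k \<times> 'k \<Rightarrow> 'k \<times> 'k \<Rightarrow> bool" where
  "pc g g' \<longleftrightarrow> fst g - fst g' \<in> Ii 1 \<and> snd g - snd g' \<in> Ii 1"

lemma cov2:
  assumes fA: "\<And>x. x \<in> Oo \<times> Oo \<Longrightarrow> f x \<in> Oo \<times> Oo" and hA: "\<And>x. x \<in> Oo \<times> Oo \<Longrightarrow> h x \<in> Oo \<times> Oo"
   and hf: "\<And>x. x \<in> Oo \<times> Oo \<Longrightarrow> h (f x) = x" and fh: "\<And>x. x \<in> Oo \<times> Oo \<Longrightarrow> f (h x) = x"
   and fE: "\<And>x y. x \<in> Oo \<times> Oo \<Longrightarrow> y \<in> Oo \<times> Oo \<Longrightarrow> pc x y \<Longrightarrow> pc (f x) (f y)"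
   and hE: "\<And>x y. x \<in> Oo \<times> Oo \<Longrightarrow> y \<in> Oo \<times> Oo \<Longrightarrow> pc x y \<Longrightarrow> pc (h x) (h y)"
   and PE: "\<And>x y. x \<in> Oo \<times> Oo \<Longrightarrow> y \<in> Oo \<times> Oo \<Longrightarrow> pc x y \<Longrightarrow> P x = P y"
  shows "card {x\<in>R \<times> R. P (f x)} = card {y\<in>R \<times> R. P y}"
proof (rule cov_gen[where A="Oo \<times> Oo" and E=pc])
  show "\<And>x y. x \<in> Oo \<times> Oo \<Longrightarrow> y \<in> Oo \<times> Oo \<Longrightarrow> pc x y \<Longrightarrow> pc y x"
    unfolding pc_def using I_sym by blast
  show "\<And>x y z. x \<in> Oo \<times> Oo \<Longrightarrow> y \<in> Oo \<times> Oo \<Longrightarrow> z \<in> Oo \<times> Oo \<Longrightarrow> pc x y \<Longrightarrow> pc y z \<Longrightarrow> pc x z"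
    unfolding pc_def using I_trans by blast
  show "R \<times> R \<subseteq> Oo \<times> Oo" "R \<times> R \<subseteq> Oo \<times> Oo" using R_sub by auto
  have ex: "\<exists>d\<in>R \<times> R. pc x d" if x: "x \<in> Oo \<times> Oo" for x
  proof -
    obtain a b where ab: "x = (a,b)" by (cases x) auto
    obtain a' where "a' \<in> R" "a - a' \<in> Ii 1" using R_ex x ab by auto
    moreover obtain b' where "b' \<in> R" "b - b' \<in> Ii 1" using R_ex x ab by auto
    ultimately show ?thesis using ab unfolding pc_def by (intro bexI[of _ "(a',b')"]) auto
  qed
  have un: "d = d'" if "d \<in> R \<times> R" "d' \<in> R \<times> R" "pc d d'" for d d'
    using that R_un unfolding pc_def by (cases d, cases d') auto
  show "\<And>x. x \<in> Oo \<times> Oo \<Longrightarrow> \<exists>d\<in>R \<times> R. pc x d" using ex by blast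
  show "\<And>x. x \<in> Oo \<times> Oo \<Longrightarrow> \<exists>d\<in>R \<times> R. pc x d" using ex by blast
  show "\<And>d d'. d \<in> R \<times> R \<Longrightarrow> d' \<in> R \<times> R \<Longrightarrow> pc d d' \<Longrightarrow> d = d'" using un by blast
  show "\<And>d d'. d \<in> R \<times> R \<Longrightarrow> d' \<in> R \<times> R \<Longrightarrow> pc d d' \<Longrightarrow> d = d'" using un by blast
  show "\<And>x. x \<in> Oo \<times> Oo \<Longrightarrow> f x \<in> Oo \<times> Oo" by (rule fA)
  show "\<And>x. x \<in> Oo \<times> Oo \<Longrightarrow> h x \<in> Oo \<times> Oo" by (rule hA)
  show "\<And>x. x \<in> Oo \<times> Oo \<Longrightarrow> h (f x) = x" by (rule hf)
  show "\<And>x. x \<in> Oo \<times> Oo \<Longrightarrow> f (h x) = x" by (rule fh)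
  show "\<And>x y. x \<in> Oo \<times> Oo \<Longrightarrow> y \<in> Oo \<times> Oo \<Longrightarrow> pc x y \<Longrightarrow> pc (f x) (f y)" by (rule fE)
  show "\<And>x y. x \<in> Oo \<times> Oo \<Longrightarrow> y \<in> Oo \<times> Oo \<Longrightarrow> pc x y \<Longrightarrow> pc (h x) (h y)" by (rule hE)
  show "\<And>x y. x \<in> Oo \<times> Oo \<Longrightarrow> y \<in> Oo \<times> Oo \<Longrightarrow> pc x y \<Longrightarrow> P x = P y" by (rule PE)
qed

lemma Qf_cong: assumes O: "g1 \<in> Oo" "g2 \<in> Oo" "g1' \<in> Oo" "g2' \<in> Oo"
  and d: "g1 - g1' \<in> Ii 1" "g2 - g2' \<in> Ii 1"
  shows "Qf g1 g2 - Qf g1' g2' \<in> Ii 1"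
proof -
  have e: "Qf g1 g2 - Qf g1' g2' = ua*(g1^2 - g1'^2) - (g1*(g2 - g2') + g2'*(g1 - g1')) + wb*(g2^2 - g2'^2)"
    unfolding Qf_def by (simp add: algebra_simps)
  have A: "ua*(g1^2 - g1'^2) \<in> Ii 1" using sqdiff[OF O(1) O(3) d(1)] by simp
  have B: "g1*(g2 - g2') + g2'*(g1 - g1') \<in> Ii 1" using O d by simp
  have C: "wb*(g2^2 - g2'^2) \<in> Ii 1" using sqdiff[OF O(2) O(4) d(2)] by simp
  show ?thesis unfolding e by (rule I_add[OF I_diff[OF A B] C])
qed

definition NN :: "'k \<Rightarrow> nat" where
  "NN c = card {g \<in> R \<times> R. Qf (fst g) (snd g) - c \<in> Ii 1}"

lemma NN_cong: assumes d: "c - c' \<in> Ii 1" shows "NN c = NN c'"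
proof -
  have "(Qf a b - c \<in> Ii 1) = (Qf a b - c' \<in> Ii 1)" for a b
  proof -
    have "(Qf a b - c) - (Qf a b - c') = c' - c" by simp
    then have "(Qf a b - c) - (Qf a b - c') \<in> Ii 1" using I_sym[OF d] by simp
    then show ?thesis by (rule cong_iff0)
  qed
  then show ?thesis unfolding NN_def by simp
qed

lemma Qf_pc: "x \<in> Oo \<times> Oo \<Longrightarrow> y \<in> Oo \<times> Oo \<Longrightarrow> pc x y \<Longrightarrow> Qf (fst x) (snd x) - Qf (fst y) (snd y) \<in> Ii 1"
  unfolding pc_def by (rule Qf_cong) auto

lemma NN_scale: assumes l: "unit l" shows "NN (l^2 * c) = NN c"
proof -
  let ?P = "\<lambda>g. Qf (fst g) (snd g) - l^2 * c \<in> Ii 1"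
  define f where "f g = (l * fst g, l * snd g)" for g :: "'k \<times> 'k"
  define h where "h g = (inverse l * fst g, inverse l * snd g)" for g :: "'k \<times> 'k"
  have lO: "l \<in> Oo" and liO: "inverse l \<in> Oo" and lnz: "l \<noteq> 0" using l unit_inv[OF l] by (auto simp: unit_def unit_nz)
  have "card {x\<in>R \<times> R. ?P (f x)} = card {y\<in>R \<times> R. ?P y}"
  proof (rule cov2)
    show "\<And>x. x \<in> Oo \<times> Oo \<Longrightarrow> f x \<in> Oo \<times> Oo" unfolding f_def using lO by auto
    show "\<And>x. x \<in> Oo \<times> Oo \<Longrightarrow> h x \<in> Oo \<times> Oo" unfolding h_def using liO by auto
    show "\<And>x. x \<in> Oo \<times> Oo \<Longrightarrow> h (f x) = x" unfolding f_def h_def using lnz by auto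
    show "\<And>x. x \<in> Oo \<times> Oo \<Longrightarrow> f (h x) = x" unfolding f_def h_def using lnz by auto
    show "\<And>x y. x \<in> Oo \<times> Oo \<Longrightarrow> y \<in> Oo \<times> Oo \<Longrightarrow> pc x y \<Longrightarrow> pc (f x) (f y)"
      unfolding f_def pc_def using lO by (auto simp: right_diff_distrib[symmetric])
    show "\<And>x y. x \<in> Oo \<times> Oo \<Longrightarrow> y \<in> Oo \<times> Oo \<Longrightarrow> pc x y \<Longrightarrow> pc (h x) (h y)"
      unfolding h_def pc_def using liO by (auto simp: right_diff_distrib[symmetric])
    fix x y assume x: "x \<in> Oo \<times> Oo" and y: "y \<in> Oo \<times> Oo" and e: "pc x y"
    have "Qf (fst x) (snd x) - Qf (fst y) (snd y) \<in> Ii 1" using Qf_pc[OF x y e] .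
    then show "?P x = ?P y" using cong_iff2 by blast
  qed
  moreover have "?P (f g) = (Qf (fst g) (snd g) - c \<in> Ii 1)" for g
  proof -
    have "Qf (fst (f g)) (snd (f g)) - l^2 * c = (l*l) * (Qf (fst g) (snd g) - c)"
      unfolding f_def Qf_def by (simp add: algebra_simps power2_eq_square)
    then show ?thesis using unit_mult_I[OF unit_mult[OF l l]] by simp
  qed
  ultimately show ?thesis unfolding NN_def by simp
qed

lemma NN_unit: assumes c: "unit c" shows "NN c = NN 1"
proof -
  obtain r where r: "r \<in> R" "r^2 - c \<in> Ii 1" using sqR[OF unit_O[OF c]] by blast
  have ru: "unit r"
  proof (rule ccontr)
    assume "\<not> unit r"
    then have "r \<in> Ii 1" using R_O r by (simp add: unit_def)
    then have rr: "r * r \<in> Ii 1" using R_O r by simp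
    have "r * r - (r * r - c) \<in> Ii 1" by (rule I_diff[OF rr]) (use r(2) in \<open>simp add: power2_eq_square\<close>)
    then show False using c by (simp add: unit_def)
  qed
  have "NN c = NN (r^2)" by (rule NN_cong) (use r(2) I_sym in blast)
  also have "\<dots> = NN (r^2 * 1)" by simp
  also have "\<dots> = NN 1" by (rule NN_scale[OF ru])
  finally show ?thesis .
qed

lemma Qf_zero_R: "g1 \<in> R \<Longrightarrow> g2 \<in> R \<Longrightarrow> (Qf g1 g2 \<in> Ii 1) = (g1 = 0 \<and> g2 = 0)"
proof
  assume g: "g1 \<in> R" "g2 \<in> R" and Q: "Qf g1 g2 \<in> Ii 1"
  then have "g1 \<in> Ii 1 \<and> g2 \<in> Ii 1" using aniso_mod2 R_O by blast
  then show "g1 = 0 \<and> g2 = 0" using R_zero_iff g by blast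
next
  assume "g1 = 0 \<and> g2 = 0" then show "Qf g1 g2 \<in> Ii 1" by (simp add: Qf_def)
qed

lemma NN_sum: "(\<Sum>c\<in>R - {0}. NN c) = q^2 - 1"
proof -
  define A where "A c = {g \<in> R \<times> R. Qf (fst g) (snd g) - c \<in> Ii 1}" for c
  have fin: "finite (R - {0})" "\<forall>c\<in>R - {0}. finite (A c)" using R_fin unfolding A_def by auto
  have disj: "\<forall>i\<in>R - {0}. \<forall>j\<in>R - {0}. i \<noteq> j \<longrightarrow> A i \<inter> A j = {}"
  proof (intro ballI impI)
    fix i j assume i: "i \<in> R - {0}" and j: "j \<in> R - {0}" and ij: "i \<noteq> j"
    show "A i \<inter> A j = {}"
    proof (rule ccontr)
      assume "A i \<inter> A j \<noteq> {}"
      then obtain g where g: "Qf (fst g) (snd g) - i \<in> Ii 1" "Qf (fst g) (snd g) - j \<in> Ii 1" unfolding A_def by auto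
      have "(Qf (fst g) (snd g) - j) - (Qf (fst g) (snd g) - i) \<in> Ii 1" by (rule I_diff) (use g in auto)
      then have "i - j \<in> Ii 1" by simp
      then show False using R_un i j ij by blast
    qed
  qed
  have U: "\<Union> (A ` (R - {0})) = R \<times> R - {(0,0)}"
  proof
    show "\<Union> (A ` (R - {0})) \<subseteq> R \<times> R - {(0,0)}"
    proof
      fix g assume "g \<in> \<Union> (A ` (R - {0}))"
      then obtain c where c: "c \<in> R" "c \<noteq> 0" "g \<in> R \<times> R" "Qf (fst g) (snd g) - c \<in> Ii 1" unfolding A_def by auto
      have "c \<notin> Ii 1" using R_zero_iff c by blast
      then have "Qf (fst g) (snd g) \<notin> Ii 1" using c(4) cong_iff0[of "Qf (fst g) (snd g)" c 1] I_sym by blast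
      then show "g \<in> R \<times> R - {(0,0)}" using c(3) by (auto simp: Qf_def)
    qed
    show "R \<times> R - {(0,0)} \<subseteq> \<Union> (A ` (R - {0}))"
    proof
      fix g assume g: "g \<in> R \<times> R - {(0,0)}"
      obtain a b where ab: "g = (a,b)" by (cases g) auto
      have abR: "a \<in> R" "b \<in> R" using g ab by auto
      have nz: "Qf a b \<notin> Ii 1" using Qf_zero_R[OF abR] g ab by auto
      have QO: "Qf a b \<in> Oo" using abR R_O by simp
      define c where "c = rep1 (Qf a b)"
      have c: "c \<in> R" "Qf a b - c \<in> Ii 1" using rep1[OF QO] c_def by auto
      have "c \<noteq> 0" using c nz by auto
      then show "g \<in> \<Union> (A ` (R - {0}))" using c ab abR unfolding A_def by auto
    qed
  qed
  have "(\<Sum>c\<in>R - {0}. NN c) = (\<Sum>c\<in>R - {0}. card (A c))" unfolding NN_def A_def by simp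
  also have "\<dots> = card (\<Union> (A ` (R - {0})))" using card_UN_disjoint[OF fin(1) fin(2) disj] by simp
  also have "\<dots> = card (R \<times> R - {(0,0)})" using U by simp
  also have "\<dots> = q^2 - 1" using R_fin R_cardq R_0
    by (simp add: card_Diff_singleton card_cartesian_product power2_eq_square)
  finally show ?thesis .
qed

lemma NN_1: "NN 1 = q + 1"
proof -
  have "(\<Sum>c\<in>R - {0}. NN c) = (\<Sum>c\<in>R - {0}. NN 1)"
  proof (rule sum.cong)
    fix c assume c: "c \<in> R - {0}"
    have "unit c" using c R_zero_iff R_O by (auto simp: unit_def)
    then show "NN c = NN 1" by (rule NN_unit)
  qed simp
  also have "\<dots> = (q - 1) * NN 1" using R_fin R_cardq R_0 by (simp add: card_Diff_singleton)
  finally have E1: "(q - 1) * NN 1 = q^2 - 1" using NN_sum by simp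
  have E2: "q^2 - 1 = (q - 1) * (q + 1)" using q_ge2 by (simp add: power2_eq_square algebra_simps)
  have E3: "(q - 1) * NN 1 = (q - 1) * (q + 1)" using E1 E2 by (rule trans)
  have nz: "q - 1 \<noteq> 0" using q_ge2 by simp
  show ?thesis using mult_left_cancel[OF nz] E3 by blast
qed

end


context dyadB begin

lemma conic_eq: assumes O: "a \<in> Oo" "b \<in> Oo" "c \<in> Oo"
  shows "(Bf (a+b+c, b, c) - 1 \<in> Ii 2) = (a - 1 \<in> Ii 1 \<and> Qf b c - b - c \<in> Ii 1)"
proof
  assume X: "Bf (a+b+c, b, c) - 1 \<in> Ii 2"
  have E0: "Bf (a+b+c, b, c) = a^2 + 2*(a*(b+c)) - 2*Qf b c"
    unfolding Qf_def by (simp add: algebra_simps power2_eq_square)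
  have X1: "Bf (a+b+c, b, c) - 1 \<in> Ii 1" using X I_mono[of 1 2] by simp
  have e1: "a^2 - 1 = (Bf (a+b+c, b, c) - 1) - 2*(a*(b+c) - Qf b c)" unfolding E0 by (simp add: algebra_simps)
  have t2: "2*(a*(b+c) - Qf b c) \<in> Ii 1" by (rule two_I) (use O in simp)
  have a2: "a^2 - 1 \<in> Ii 1" by (subst e1) (rule I_diff[OF X1 t2])
  have e2: "(a - 1) * (a - 1) = (a^2 - 1) - 2*(a - 1)" by (simp add: algebra_simps power2_eq_square)
  have t3: "2*(a - 1) \<in> Ii 1" by (rule two_I) (use O in simp)
  have "(a - 1) * (a - 1) \<in> Ii 1" by (subst e2) (rule I_diff[OF a2 t3])
  then have a1: "a - 1 \<in> Ii 1" by (rule I_sq)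
  obtain g where g: "g \<in> Oo" "a - 1 = 2^1 * g" using I_elim[OF a1] by blast
  have ag: "a = 1 + 2*g" using g by (simp add: algebra_simps)
  have E1: "2*((b+c) - Qf b c) = (Bf (a+b+c, b, c) - 1) - 4*(g + g^2 + g*(b+c))"
    unfolding E0 ag by (simp add: Qf_def algebra_simps power2_eq_square)
  have "4*(g + g^2 + g*(b+c)) \<in> Ii 2" using four_I g O by simp
  then have "2*((b+c) - Qf b c) \<in> Ii 2" unfolding E1 by (rule I_diff[OF X])
  then have "(b+c) - Qf b c \<in> Ii 1" using two_mult_I2 by blast
  then have "Qf b c - (b + c) \<in> Ii 1" by (rule I_sym)
  then have "Qf b c - b - c \<in> Ii 1" by (simp add: diff_diff_eq)
  then show "a - 1 \<in> Ii 1 \<and> Qf b c - b - c \<in> Ii 1" using a1 by simp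
next
  assume h: "a - 1 \<in> Ii 1 \<and> Qf b c - b - c \<in> Ii 1"
  obtain g where g: "g \<in> Oo" "a - 1 = 2^1 * g" using I_elim h by blast
  have ag: "a = 1 + 2*g" using g by (simp add: algebra_simps)
  have E1: "Bf (a+b+c, b, c) - 1 = 4*(g + g^2 + g*(b+c)) + 2*(-(Qf b c - b - c))"
    unfolding ag Qf_def by (simp add: algebra_simps power2_eq_square)
  have A: "4*(g + g^2 + g*(b+c)) \<in> Ii 2" using four_I g O by simp
  have "-(Qf b c - b - c) \<in> Ii 1" by (subst I_neg) (use h in blast)
  then have B: "2*(-(Qf b c - b - c)) \<in> Ii 2" using two_mult_I2 by blast
  show "Bf (a+b+c, b, c) - 1 \<in> Ii 2" unfolding E1 by (rule I_add[OF A B])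
qed

lemma inv_P12: "inv3 1 (\<lambda>x. Bf x - \<rho> \<in> Ii 2)"
  using inv_P1[of 0 \<rho>] by (simp add: numeral_2_eq_2 One_nat_def)

lemma K6: "cnt 1 (\<lambda>x. Bf x - 1 \<in> Ii 2) = q + 1"
proof -
  let ?P = "\<lambda>x. Bf x - 1 \<in> Ii 2"
  define f where "f x = (fst x + fst (snd x) + snd (snd x), fst (snd x), snd (snd x))" for x :: "'k \<times> 'k \<times> 'k"
  define h where "h x = (fst x - fst (snd x) - snd (snd x), fst (snd x), snd (snd x))" for x :: "'k \<times> 'k \<times> 'k"
  have "card {x\<in>S3 R. ?P (f x)} = card {y\<in>S3 R. ?P y}"
  proof (rule cov3[OF crs_R crs_R])
    show "\<And>x. x \<in> O3 \<Longrightarrow> f x \<in> O3" unfolding f_def O3_def by auto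
    show "\<And>x. x \<in> O3 \<Longrightarrow> h x \<in> O3" unfolding h_def O3_def by auto
    show "\<And>x. x \<in> O3 \<Longrightarrow> h (f x) = x" unfolding f_def h_def by auto
    show "\<And>x. x \<in> O3 \<Longrightarrow> f (h x) = x" unfolding f_def h_def by auto
    show "\<And>x y. x \<in> O3 \<Longrightarrow> y \<in> O3 \<Longrightarrow> tc 1 x y \<Longrightarrow> tc 1 (f x) (f y)"
    proof -
      fix x y assume "tc 1 x y"
      then have t: "fst x - fst y \<in> Ii 1" "fst (snd x) - fst (snd y) \<in> Ii 1" "snd (snd x) - snd (snd y) \<in> Ii 1"
        unfolding tc_def by auto
      have "fst x - fst y + (fst (snd x) - fst (snd y)) + (snd (snd x) - snd (snd y)) \<in> Ii 1"
        by (rule I_add[OF I_add[OF t(1) t(2)] t(3)])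
      then show "tc 1 (f x) (f y)" using \<open>tc 1 x y\<close> unfolding f_def tc_def by (simp add: algebra_simps)
    qed
    show "\<And>x y. x \<in> O3 \<Longrightarrow> y \<in> O3 \<Longrightarrow> tc 1 x y \<Longrightarrow> tc 1 (h x) (h y)"
    proof -
      fix x y assume "tc 1 x y"
      then have t: "fst x - fst y \<in> Ii 1" "fst (snd x) - fst (snd y) \<in> Ii 1" "snd (snd x) - snd (snd y) \<in> Ii 1"
        unfolding tc_def by auto
      have "fst x - fst y - (fst (snd x) - fst (snd y)) - (snd (snd x) - snd (snd y)) \<in> Ii 1"
        by (rule I_diff[OF I_diff[OF t(1) t(2)] t(3)])
      then show "tc 1 (h x) (h y)" using \<open>tc 1 x y\<close> unfolding h_def tc_def by (simp add: algebra_simps)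
    qed
    show "inv3 1 ?P" by (rule inv_P12)
  qed
  moreover have "{x\<in>S3 R. ?P (f x)} = {x\<in>S3 R. fst x - 1 \<in> Ii 1 \<and> Qf (fst (snd x)) (snd (snd x)) - fst (snd x) - snd (snd x) \<in> Ii 1}"
  proof (rule Collect_cong)
    fix x :: "'k \<times> 'k \<times> 'k"
    obtain a b c where abc: "x = (a,b,c)" by (cases x) auto
    show "(x \<in> S3 R \<and> ?P (f x)) = (x \<in> S3 R \<and> fst x - 1 \<in> Ii 1 \<and> Qf (fst (snd x)) (snd (snd x)) - fst (snd x) - snd (snd x) \<in> Ii 1)"
      using conic_eq[of a b c] R_O unfolding abc f_def by auto
  qed
  moreover have "card {x\<in>S3 R. fst x - 1 \<in> Ii 1 \<and> Qf (fst (snd x)) (snd (snd x)) - fst (snd x) - snd (snd x) \<in> Ii 1}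
      = card {g\<in>R \<times> R. Qf (fst g) (snd g) - fst g - snd g \<in> Ii 1}"
  proof -
    have "{x\<in>S3 R. fst x - 1 \<in> Ii 1 \<and> Qf (fst (snd x)) (snd (snd x)) - fst (snd x) - snd (snd x) \<in> Ii 1}
       = (\<lambda>g. (1, fst g, snd g)) ` {g\<in>R \<times> R. Qf (fst g) (snd g) - fst g - snd g \<in> Ii 1}"
    proof
      show "{x\<in>S3 R. fst x - 1 \<in> Ii 1 \<and> Qf (fst (snd x)) (snd (snd x)) - fst (snd x) - snd (snd x) \<in> Ii 1}
         \<subseteq> (\<lambda>g. (1, fst g, snd g)) ` {g\<in>R \<times> R. Qf (fst g) (snd g) - fst g - snd g \<in> Ii 1}"
      proof
        fix x assume x: "x \<in> {x\<in>S3 R. fst x - 1 \<in> Ii 1 \<and> Qf (fst (snd x)) (snd (snd x)) - fst (snd x) - snd (snd x) \<in> Ii 1}"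
        obtain a b c where abc: "x = (a,b,c)" by (cases x) auto
        have "a = 1" using R_un[of a 1] R_1 x abc by auto
        then show "x \<in> (\<lambda>g. (1, fst g, snd g)) ` {g\<in>R \<times> R. Qf (fst g) (snd g) - fst g - snd g \<in> Ii 1}"
          using x abc by (auto intro!: image_eqI[where x="(b,c)"])
      qed
      show "(\<lambda>g. (1, fst g, snd g)) ` {g\<in>R \<times> R. Qf (fst g) (snd g) - fst g - snd g \<in> Ii 1}
         \<subseteq> {x\<in>S3 R. fst x - 1 \<in> Ii 1 \<and> Qf (fst (snd x)) (snd (snd x)) - fst (snd x) - snd (snd x) \<in> Ii 1}"
        using R_1 by auto
    qed
    then show ?thesis by (simp add: card_image inj_on_def)
  qed
  moreover have "card {g\<in>R \<times> R. Qf (fst g) (snd g) - fst g - snd g \<in> Ii 1} = NN (- Qf 1 1)"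
  proof -
    let ?C = "\<lambda>g. Qf (fst g) (snd g) - fst g - snd g \<in> Ii 1"
    define f2 where "f2 g = (fst g + 1, snd g + 1)" for g :: "'k \<times> 'k"
    define h2 where "h2 g = (fst g - 1, snd g - 1)" for g :: "'k \<times> 'k"
    have "card {x\<in>R \<times> R. ?C (f2 x)} = card {y\<in>R \<times> R. ?C y}"
    proof (rule cov2)
      show "\<And>x. x \<in> Oo \<times> Oo \<Longrightarrow> f2 x \<in> Oo \<times> Oo" unfolding f2_def by auto
      show "\<And>x. x \<in> Oo \<times> Oo \<Longrightarrow> h2 x \<in> Oo \<times> Oo" unfolding h2_def by auto
      show "\<And>x. x \<in> Oo \<times> Oo \<Longrightarrow> h2 (f2 x) = x" unfolding f2_def h2_def by auto
      show "\<And>x. x \<in> Oo \<times> Oo \<Longrightarrow> f2 (h2 x) = x" unfolding f2_def h2_def by auto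
      show "\<And>x y. x \<in> Oo \<times> Oo \<Longrightarrow> y \<in> Oo \<times> Oo \<Longrightarrow> pc x y \<Longrightarrow> pc (f2 x) (f2 y)"
        unfolding f2_def pc_def by auto
      show "\<And>x y. x \<in> Oo \<times> Oo \<Longrightarrow> y \<in> Oo \<times> Oo \<Longrightarrow> pc x y \<Longrightarrow> pc (h2 x) (h2 y)"
        unfolding h2_def pc_def by auto
      fix x y assume x: "x \<in> Oo \<times> Oo" and y: "y \<in> Oo \<times> Oo" and e: "pc x y"
      have A: "Qf (fst x) (snd x) - Qf (fst y) (snd y) \<in> Ii 1" using Qf_pc[OF x y e] .
      have B: "fst x - fst y \<in> Ii 1" "snd x - snd y \<in> Ii 1" using e unfolding pc_def by auto
      have eq: "(Qf (fst x) (snd x) - fst x - snd x) - (Qf (fst y) (snd y) - fst y - snd y)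
          = (Qf (fst x) (snd x) - Qf (fst y) (snd y)) - (fst x - fst y) - (snd x - snd y)" by simp
      have D: "(Qf (fst x) (snd x) - fst x - snd x) - (Qf (fst y) (snd y) - fst y - snd y) \<in> Ii 1"
        by (subst eq) (rule I_diff[OF I_diff[OF A B(1)] B(2)])
      show "?C x = ?C y" by (rule cong_iff0[OF D])
    qed
    note cardeq = this
    have pt: "?C (f2 g) = (Qf (fst g) (snd g) - (- Qf 1 1) \<in> Ii 1)" if g: "g \<in> R \<times> R" for g
    proof -
      have gO: "fst g \<in> Oo" "snd g \<in> Oo" using g R_O by auto
      have eq: "(Qf (fst (f2 g)) (snd (f2 g)) - fst (f2 g) - snd (f2 g)) - (Qf (fst g) (snd g) - (- Qf 1 1))
          = 2 * (ua * fst g + wb * snd g - fst g - snd g - 1)"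
        unfolding f2_def Qf_def by (simp add: algebra_simps power2_eq_square)
      have D: "(Qf (fst (f2 g)) (snd (f2 g)) - fst (f2 g) - snd (f2 g)) - (Qf (fst g) (snd g) - (- Qf 1 1)) \<in> Ii 1"
        by (subst eq) (rule two_I, use gO in simp)
      show ?thesis by (rule cong_iff0[OF D])
    qed
    have E: "{x\<in>R \<times> R. ?C (f2 x)} = {g\<in>R \<times> R. Qf (fst g) (snd g) - (- Qf 1 1) \<in> Ii 1}"
    proof (rule Collect_cong)
      fix g :: "'k \<times> 'k"
      show "(g \<in> R \<times> R \<and> ?C (f2 g)) = (g \<in> R \<times> R \<and> Qf (fst g) (snd g) - (- Qf 1 1) \<in> Ii 1)"
        using pt[of g] by blast
    qed
    show ?thesis unfolding NN_def E[symmetric] by (rule cardeq[symmetric])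
  qed
  moreover have "NN (- Qf 1 1) = q + 1"
  proof -
    have "Qf 1 1 \<notin> Ii 1" using aniso_mod2[of 1 1] by auto
    then have "unit (- Qf 1 1)" by (simp add: unit_def)
    then show ?thesis using NN_unit NN_1 by simp
  qed
  ultimately show ?thesis unfolding cnt_def Rep_1 by simp
qed

end


context dyadB begin

lemma unit_neg: "unit x \<Longrightarrow> unit (- x)" by (simp add: unit_def)

lemma no_111:
  assumes O: "p0 \<in> Oo" "p1 \<in> Oo" "p2 \<in> Oo" and d: "p1 - p0 \<in> Ii 1" "p2 - p0 \<in> Ii 1"
    and B: "Bf (p0,p1,p2) - 1 \<in> Ii 2"
  shows False
proof -
  obtain d1 where d1: "d1 \<in> Oo" "p1 - p0 = 2^1 * d1" using I_elim[OF d(1)] by blast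
  obtain d2 where d2: "d2 \<in> Oo" "p2 - p0 = 2^1 * d2" using I_elim[OF d(2)] by blast
  have p1e: "p1 = p0 + 2*d1" and p2e: "p2 = p0 + 2*d2" using d1 d2 by (simp_all add: algebra_simps)
  define T where "T = -(p0^2 + 1) - 2*((ua+wb)*p0^2)"
  define X where "X = -(1+2*ua)*(p0*d1 + d1^2) - (1+2*wb)*(p0*d2 + d2^2)"
  have XO: "X \<in> Oo" unfolding X_def using O d1 d2 by simp
  have eT: "T = (Bf (p0,p1,p2) - 1) - 4*X" unfolding T_def X_def p1e p2e by (simp add: algebra_simps power2_eq_square)
  have T2: "T \<in> Ii 2" by (subst eT) (rule I_diff[OF B four_I[OF XO]])
  have T1: "T \<in> Ii 1" using T2 I_mono[of 1 2] by simp
  have e3: "p0^2 + 1 = - T - 2*((ua+wb)*p0^2)" unfolding T_def by simp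
  have t3: "2*((ua+wb)*p0^2) \<in> Ii 1" by (rule two_I) (use O in simp)
  have "- T \<in> Ii 1" using T1 by simp
  then have s1: "p0^2 + 1 \<in> Ii 1" by (subst e3) (rule I_diff[OF _ t3])
  have e4: "(p0 - 1) * (p0 - 1) = (p0^2 + 1) - 2*p0" by (simp add: algebra_simps power2_eq_square)
  have "(p0 - 1) * (p0 - 1) \<in> Ii 1" by (subst e4) (rule I_diff[OF s1 two_I[OF O(1)]])
  then have "p0 - 1 \<in> Ii 1" by (rule I_sq)
  then obtain g where g: "g \<in> Oo" "p0 - 1 = 2^1 * g" using I_elim by blast
  have p0e: "p0 = 1 + 2*g" using g by (simp add: algebra_simps)
  define Y where "Y = (g + g^2) + 2*((ua+wb)*(g+g^2))"
  have YO: "Y \<in> Oo" unfolding Y_def using g by simp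
  have e5: "2*(1+ua+wb) = - T - 4*Y" unfolding T_def Y_def p0e by (simp add: algebra_simps power2_eq_square)
  have "- T \<in> Ii 2" using T2 by simp
  then have "2*(1+ua+wb) \<in> Ii 2" by (subst e5) (rule I_diff[OF _ four_I[OF YO]])
  then have h: "1+ua+wb \<in> Ii 1" using two_mult_I2 by blast
  have e6: "Qf 1 1 = (1+ua+wb) - 2" unfolding Qf_def by simp
  have "Qf 1 1 \<in> Ii 1" by (subst e6) (rule I_diff[OF h two_I1])
  then show False using aniso_mod2[of 1 1] by simp
qed

definition bet :: "'k \<times> 'k \<times> 'k \<Rightarrow> 'k \<times> 'k \<times> 'k \<Rightarrow> 'k" where
  "bet p e = fst p * fst e - (1+2*ua) * (fst (snd p) * fst (snd e)) - (1+2*wb) * (snd (snd p) * snd (snd e))"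

lemma bet_simp[simp]: "bet (a,b,c) (x,y,z) = a*x - (1+2*ua)*(b*y) - (1+2*wb)*(c*z)"
  by (simp add: bet_def)

lemma Bf_cmb: "Bf (a + N*x, b + N*y, c + N*z) = Bf (a,b,c) + 2*N*bet (a,b,c) (x,y,z) + N*N*Bf (x,y,z)"
  by (simp add: algebra_simps power2_eq_square)

lemma tc_lin1:
  "tc 1 x y \<Longrightarrow> fst x - fst y + (fst (snd x) - fst (snd y)) + (snd (snd x) - snd (snd y)) \<in> Ii 1"
  unfolding tc_def by (intro I_add[OF I_add]) auto

lemma hens_1:
  assumes p: "p \<in> S3 R" and B: "Bf p - 1 \<in> Ii 2"
  shows "card {e\<in>S3 R. Bf (cmb3 1 p e) - 1 \<in> Ii 3} = q^2"
proof -
  obtain p0 p1 p2 where pe: "p = (p0,p1,p2)" by (cases p) auto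
  have pO: "p0 \<in> Oo" "p1 \<in> Oo" "p2 \<in> Oo" using p pe R_O by auto
  obtain c0 where c0: "c0 \<in> Oo" "Bf p - 1 = 2^2 * c0" using I_elim[OF B] by blast
  define Pe where "Pe e \<longleftrightarrow> c0 + p0 * fst e + p1 * fst (snd e) + p2 * snd (snd e) + (fst e + fst (snd e) + snd (snd e))^2 \<in> Ii 1"
    for e :: "'k \<times> 'k \<times> 'k"
  have eq1: "(Bf (cmb3 1 p e) - 1 \<in> Ii 3) = Pe e" if e: "e \<in> O3" for e
  proof -
    obtain e0 e1 e2 where ee: "e = (e0,e1,e2)" by (cases e) auto
    have eO: "e0 \<in> Oo" "e1 \<in> Oo" "e2 \<in> Oo" using e ee by auto
    have E1: "Bf (cmb3 1 p e) - 1 = 4 * (c0 + bet p e + Bf e)"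
      using Bf_cmb[of p0 2 e0 p1 e1 p2 e2] c0(2) unfolding pe ee by (simp add: algebra_simps)
    have "(Bf (cmb3 1 p e) - 1 \<in> Ii 3) = (c0 + bet p e + Bf e \<in> Ii 1)" unfolding E1 by (rule four_mult_I3)
    also have "\<dots> = Pe e"
    proof -
      define Z where "Z = -(1+ua)*(p1*e1) - (1+wb)*(p2*e2) - (1+ua)*e1^2 - (1+wb)*e2^2 - e0*e1 - e0*e2 - e1*e2"
      have ZO: "Z \<in> Oo" unfolding Z_def using pO eO by simp
      have eZ: "(c0 + bet p e + Bf e) - (c0 + p0 * e0 + p1 * e1 + p2 * e2 + (e0 + e1 + e2)^2) = 2 * Z"
        unfolding pe ee Z_def by (simp add: algebra_simps power2_eq_square)
      have "(c0 + bet p e + Bf e) - (c0 + p0 * e0 + p1 * e1 + p2 * e2 + (e0 + e1 + e2)^2) \<in> Ii 1"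
        by (subst eZ) (rule two_I[OF ZO])
      then show ?thesis unfolding Pe_def ee by (simp only: fst_conv snd_conv) (rule cong_iff0)
    qed
    finally show ?thesis .
  qed
  have cnt_eq: "card {e\<in>S3 R. Bf (cmb3 1 p e) - 1 \<in> Ii 3} = card {e\<in>S3 R. Pe e}"
  proof -
    have "{e\<in>S3 R. Bf (cmb3 1 p e) - 1 \<in> Ii 3} = {e\<in>S3 R. Pe e}"
    proof (rule Collect_cong)
      fix e :: "'k \<times> 'k \<times> 'k"
      show "(e \<in> S3 R \<and> Bf (cmb3 1 p e) - 1 \<in> Ii 3) = (e \<in> S3 R \<and> Pe e)"
        using eq1[of e] S3_O3[of e 1] Rep_1 by auto
    qed
    then show ?thesis by simp
  qed
  have invPe: "inv3 1 Pe" unfolding inv3_def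
  proof (intro allI impI)
    fix a b c a' b' c' :: 'k
    assume h: "a \<in> Oo" "b \<in> Oo" "c \<in> Oo" "a' \<in> Oo" "b' \<in> Oo" "c' \<in> Oo" "a - a' \<in> Ii 1" "b - b' \<in> Ii 1" "c - c' \<in> Ii 1"
    have s: "(a + b + c) - (a' + b' + c') \<in> Ii 1"
    proof -
      have eq: "(a + b + c) - (a' + b' + c') = (a - a') + (b - b') + (c - c')" by simp
      show ?thesis by (subst eq) (rule I_add[OF I_add[OF h(7) h(8)] h(9)])
    qed
    have sq: "(a + b + c)^2 - (a' + b' + c')^2 \<in> Ii 1" using sqdiff[OF _ _ s] h by simp
    have eq: "(c0 + p0 * a + p1 * b + p2 * c + (a + b + c)^2) - (c0 + p0 * a' + p1 * b' + p2 * c' + (a' + b' + c')^2)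
      = p0 * (a - a') + p1 * (b - b') + p2 * (c - c') + ((a + b + c)^2 - (a' + b' + c')^2)"
      by (simp add: algebra_simps)
    have D: "(c0 + p0 * a + p1 * b + p2 * c + (a + b + c)^2) - (c0 + p0 * a' + p1 * b' + p2 * c' + (a' + b' + c')^2) \<in> Ii 1"
      by (subst eq) (rule I_add[OF I_add[OF I_add[OF O_mult_I[OF pO(1) h(7)] O_mult_I[OF pO(2) h(8)]] O_mult_I[OF pO(3) h(9)]] sq])
    show "Pe (a, b, c) = Pe (a', b', c')" unfolding Pe_def fst_conv snd_conv by (rule cong_iff0[OF D])
  qed
  have tcsum: "tc 1 x y \<Longrightarrow> fst x - fst y + (fst (snd x) - fst (snd y)) + (snd (snd x) - snd (snd y)) \<in> Ii 1" for x y
    by (rule tc_lin1)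
  have tcI: "tc 1 x y \<Longrightarrow> fst x - fst y \<in> Ii 1 \<and> fst (snd x) - fst (snd y) \<in> Ii 1 \<and> snd (snd x) - snd (snd y) \<in> Ii 1" for x y
    unfolding tc_def .
  show ?thesis
  proof (cases "unit (p0 - p2)")
    case True
    define f where "f x = (fst x, fst (snd x), snd (snd x) - fst x - fst (snd x))" for x :: "'k \<times> 'k \<times> 'k"
    define h where "h x = (fst x, fst (snd x), fst x + fst (snd x) + snd (snd x))" for x :: "'k \<times> 'k \<times> 'k"
    have "card {x\<in>S3 R. Pe (f x)} = card {y\<in>S3 R. Pe y}"
    proof (rule cov3[OF crs_R crs_R _ _ _ _ _ _ invPe])
      show "\<And>x. x \<in> O3 \<Longrightarrow> f x \<in> O3" unfolding f_def O3_def by auto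
      show "\<And>x. x \<in> O3 \<Longrightarrow> h x \<in> O3" unfolding h_def O3_def by auto
      show "\<And>x. x \<in> O3 \<Longrightarrow> h (f x) = x" unfolding f_def h_def by auto
      show "\<And>x. x \<in> O3 \<Longrightarrow> f (h x) = x" unfolding f_def h_def by auto
      show "\<And>x y. x \<in> O3 \<Longrightarrow> y \<in> O3 \<Longrightarrow> tc 1 x y \<Longrightarrow> tc 1 (f x) (f y)"
      proof -
        fix x y assume t: "tc 1 x y"
        have "snd (snd x) - snd (snd y) - (fst x - fst y) - (fst (snd x) - fst (snd y)) \<in> Ii 1"
          using t unfolding tc_def by (intro I_diff[OF I_diff]) auto
        then show "tc 1 (f x) (f y)" using t unfolding f_def tc_def by (simp add: algebra_simps)
      qed
      show "\<And>x y. x \<in> O3 \<Longrightarrow> y \<in> O3 \<Longrightarrow> tc 1 x y \<Longrightarrow> tc 1 (h x) (h y)"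
      proof -
        fix x y assume t: "tc 1 x y"
        have "fst x - fst y + (fst (snd x) - fst (snd y)) + (snd (snd x) - snd (snd y)) \<in> Ii 1" using tcsum[OF t] .
        then show "tc 1 (h x) (h y)" using t unfolding h_def tc_def by (simp add: algebra_simps)
      qed
    qed
    moreover have "card {x\<in>S3 R. Pe (f x)} = q^2"
    proof (rule cnt_u0)
      fix b c assume bc: "b \<in> R" "c \<in> R"
      define H where "H = c0 + (p1 - p2) * b + p2 * c + c^2"
      have HO: "H \<in> Oo" unfolding H_def using bc R_O c0 pO by simp
      have e: "Pe (f (a,b,c)) = ((p0 - p2) * a + H \<in> Ii 1)" for a
        unfolding Pe_def f_def H_def by (simp add: algebra_simps power2_eq_square)
      show "\<exists>!a. a \<in> R \<and> Pe (f (a, b, c))" unfolding e using lin_unique[OF True HO] .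
    qed
    ultimately show ?thesis using cnt_eq by simp
  next
    case F1: False
    show ?thesis
    proof (cases "unit (p0 - p1)")
      case True
      define f where "f x = (fst x, fst (snd x) - fst x - snd (snd x), snd (snd x))" for x :: "'k \<times> 'k \<times> 'k"
      define h where "h x = (fst x, fst x + fst (snd x) + snd (snd x), snd (snd x))" for x :: "'k \<times> 'k \<times> 'k"
      have "card {x\<in>S3 R. Pe (f x)} = card {y\<in>S3 R. Pe y}"
      proof (rule cov3[OF crs_R crs_R _ _ _ _ _ _ invPe])
        show "\<And>x. x \<in> O3 \<Longrightarrow> f x \<in> O3" unfolding f_def O3_def by auto
        show "\<And>x. x \<in> O3 \<Longrightarrow> h x \<in> O3" unfolding h_def O3_def by auto
        show "\<And>x. x \<in> O3 \<Longrightarrow> h (f x) = x" unfolding f_def h_def by auto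
        show "\<And>x. x \<in> O3 \<Longrightarrow> f (h x) = x" unfolding f_def h_def by auto
        show "\<And>x y. x \<in> O3 \<Longrightarrow> y \<in> O3 \<Longrightarrow> tc 1 x y \<Longrightarrow> tc 1 (f x) (f y)"
        proof -
          fix x y assume t: "tc 1 x y"
          have "fst (snd x) - fst (snd y) - (fst x - fst y) - (snd (snd x) - snd (snd y)) \<in> Ii 1"
            using t unfolding tc_def by (intro I_diff[OF I_diff]) auto
          then show "tc 1 (f x) (f y)" using t unfolding f_def tc_def by (simp add: algebra_simps)
        qed
        show "\<And>x y. x \<in> O3 \<Longrightarrow> y \<in> O3 \<Longrightarrow> tc 1 x y \<Longrightarrow> tc 1 (h x) (h y)"
        proof -
          fix x y assume t: "tc 1 x y"
          have "fst x - fst y + (fst (snd x) - fst (snd y)) + (snd (snd x) - snd (snd y)) \<in> Ii 1" using tcsum[OF t] .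
          then show "tc 1 (h x) (h y)" using t unfolding h_def tc_def by (simp add: algebra_simps)
        qed
      qed
      moreover have "card {x\<in>S3 R. Pe (f x)} = q^2"
      proof (rule cnt_u0)
        fix b c assume bc: "b \<in> R" "c \<in> R"
        define H where "H = c0 + p1 * b + (p2 - p1) * c + b^2"
        have HO: "H \<in> Oo" unfolding H_def using bc R_O c0 pO by simp
        have e: "Pe (f (a,b,c)) = ((p0 - p1) * a + H \<in> Ii 1)" for a
          unfolding Pe_def f_def H_def by (simp add: algebra_simps power2_eq_square)
        show "\<exists>!a. a \<in> R \<and> Pe (f (a, b, c))" unfolding e using lin_unique[OF True HO] .
      qed
      ultimately show ?thesis using cnt_eq by simp
    next
      case False
      have "p0 - p2 \<in> Ii 1" using F1 pO by (simp add: unit_def)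
      moreover have "p0 - p1 \<in> Ii 1" using False pO by (simp add: unit_def)
      ultimately have "p1 - p0 \<in> Ii 1" "p2 - p0 \<in> Ii 1" using I_sym by blast+
      then show ?thesis using no_111[OF pO] B pe by simp
    qed
  qed
qed

end


context dyadB begin

lemma hens_big:
  assumes p: "p \<in> S3 (Rep (Suc (Suc k)))" and B: "Bf p - 1 \<in> Ii (Suc (Suc (Suc k)))"
  shows "card {e\<in>S3 R. Bf (cmb3 (Suc (Suc k)) p e) - 1 \<in> Ii (Suc (Suc (Suc (Suc k))))} = q^2"
proof -
  obtain p0 p1 p2 where pe: "p = (p0,p1,p2)" by (cases p) auto
  have pO: "p0 \<in> Oo" "p1 \<in> Oo" "p2 \<in> Oo" using S3_O3[OF p] pe by auto
  define N where "N = (2::'k)^k"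
  have NO: "N \<in> Oo" unfolding N_def by simp
  have A2: "(2::'k)^(Suc (Suc k)) = 4*N" and A3: "(2::'k)^(Suc (Suc (Suc k))) = 8*N"
    and A4: "(2::'k)^(Suc (Suc (Suc (Suc k)))) = 16*N" unfolding N_def by simp_all
  obtain c0 where c0: "c0 \<in> Oo" "Bf p - 1 = 8*N * c0" using I_elim[OF B] unfolding A3 by blast
  have L: "((8*N)*y \<in> Ii (Suc (Suc (Suc (Suc k))))) = (y \<in> Ii 1)" for y
    using pow2_mult_I[of "Suc (Suc (Suc k))" y 1, unfolded A3] by simp
  have eq: "(Bf (cmb3 (Suc (Suc k)) p e) - 1 \<in> Ii (Suc (Suc (Suc (Suc k))))) = (c0 + bet p e \<in> Ii 1)"
    if e: "e \<in> O3" for e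
  proof -
    obtain e0 e1 e2 where ee: "e = (e0,e1,e2)" by (cases e) auto
    have eO: "e0 \<in> Oo" "e1 \<in> Oo" "e2 \<in> Oo" using e ee by auto
    have E1: "Bf (cmb3 (Suc (Suc k)) p e) - 1 = (8*N) * (c0 + bet p e) + (16*N) * (N * Bf e)"
      using Bf_cmb[of p0 "4*N" e0 p1 e1 p2 e2] c0(2) unfolding pe ee cmb3_simp A2
      by (simp add: algebra_simps)
    have T: "(16*N) * (N * Bf e) \<in> Ii (Suc (Suc (Suc (Suc k))))"
      using pow2_I[of "N * Bf e" "Suc (Suc (Suc (Suc k)))", unfolded A4] NO eO ee by simp
    have D: "Bf (cmb3 (Suc (Suc k)) p e) - 1 - (8*N) * (c0 + bet p e) \<in> Ii (Suc (Suc (Suc (Suc k))))"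
      unfolding E1 using T by simp
    have "(Bf (cmb3 (Suc (Suc k)) p e) - 1 \<in> Ii (Suc (Suc (Suc (Suc k))))) = ((8*N) * (c0 + bet p e) \<in> Ii (Suc (Suc (Suc (Suc k)))))"
      by (rule cong_iff0[OF D])
    also have "\<dots> = (c0 + bet p e \<in> Ii 1)" by (rule L)
    finally show ?thesis .
  qed
  have cnt_eq: "{e\<in>S3 R. Bf (cmb3 (Suc (Suc k)) p e) - 1 \<in> Ii (Suc (Suc (Suc (Suc k))))} = {e\<in>S3 R. c0 + bet p e \<in> Ii 1}"
  proof (rule Collect_cong)
    fix e :: "'k \<times> 'k \<times> 'k"
    show "(e \<in> S3 R \<and> Bf (cmb3 (Suc (Suc k)) p e) - 1 \<in> Ii (Suc (Suc (Suc (Suc k))))) = (e \<in> S3 R \<and> c0 + bet p e \<in> Ii 1)"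
      using eq[of e] S3_O3[of e 1] Rep_1 by auto
  qed
  have prim: "\<not> (p0 \<in> Ii 1 \<and> p1 \<in> Ii 1 \<and> p2 \<in> Ii 1)"
  proof
    assume "p0 \<in> Ii 1 \<and> p1 \<in> Ii 1 \<and> p2 \<in> Ii 1"
    then have "Bf p \<in> Ii 2" using all_I1_Bf pe by blast
    then have b1: "Bf p \<in> Ii 1" using I_mono[of 1 2] by simp
    have b2: "Bf p - 1 \<in> Ii 1" using B I_mono[of 1 "Suc (Suc (Suc k))"] by simp
    have "Bf p - (Bf p - 1) \<in> Ii 1" by (rule I_diff[OF b1 b2])
    then show False by simp
  qed
  have uc: "unit (1 + 2*ua)" "unit (1 + 2*wb)" using unit_1plus2 by auto
  show ?thesis unfolding cnt_eq
  proof (cases "p0 \<in> Ii 1")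
    case False
    then have u: "unit p0" using pO by (simp add: unit_def)
    show "card {e\<in>S3 R. c0 + bet p e \<in> Ii 1} = q^2"
    proof (rule cnt_u0)
      fix b c assume bc: "b \<in> R" "c \<in> R"
      define H where "H = c0 - (1+2*ua)*(p1*b) - (1+2*wb)*(p2*c)"
      have HO: "H \<in> Oo" unfolding H_def using bc R_O c0 pO by simp
      have e: "(c0 + bet p (a,b,c) \<in> Ii 1) = (p0 * a + H \<in> Ii 1)" for a
        unfolding pe H_def by (simp add: algebra_simps)
      show "\<exists>!a. a \<in> R \<and> c0 + bet p (a, b, c) \<in> Ii 1" unfolding e using lin_unique[OF u HO] .
    qed
  next
    case T0: True
    show "card {e\<in>S3 R. c0 + bet p e \<in> Ii 1} = q^2"
    proof (cases "p1 \<in> Ii 1")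
      case False
      then have "unit p1" using pO by (simp add: unit_def)
      then have u: "unit (-(1+2*ua) * p1)" by (rule unit_mult[OF unit_neg[OF uc(1)]])
      show ?thesis
      proof (rule cnt_u1)
        fix a c assume ac: "a \<in> R" "c \<in> R"
        define H where "H = c0 + p0*a - (1+2*wb)*(p2*c)"
        have HO: "H \<in> Oo" unfolding H_def using ac R_O c0 pO by simp
        have e: "(c0 + bet p (a,b,c) \<in> Ii 1) = ((-(1+2*ua) * p1) * b + H \<in> Ii 1)" for b
          unfolding pe H_def by (simp add: algebra_simps)
        show "\<exists>!b. b \<in> R \<and> c0 + bet p (a, b, c) \<in> Ii 1" unfolding e using lin_unique[OF u HO] .
      qed
    next
      case T1: True
      then have "p2 \<notin> Ii 1" using prim T0 by blast
      then have "unit p2" using pO by (simp add: unit_def)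
      then have u: "unit (-(1+2*wb) * p2)" by (rule unit_mult[OF unit_neg[OF uc(2)]])
      show ?thesis
      proof (rule cnt_u2)
        fix a b assume ab: "a \<in> R" "b \<in> R"
        define H where "H = c0 + p0*a - (1+2*ua)*(p1*b)"
        have HO: "H \<in> Oo" unfolding H_def using ab R_O c0 pO by simp
        have e: "(c0 + bet p (a,b,c) \<in> Ii 1) = ((-(1+2*wb) * p2) * c + H \<in> Ii 1)" for c
          unfolding pe H_def by (simp add: algebra_simps)
        show "\<exists>!c. c \<in> R \<and> c0 + bet p (a, b, c) \<in> Ii 1" unfolding e using lin_unique[OF u HO] .
      qed
    qed
  qed
qed

end


context dyadB begin

lemma pow2_I_Suc: "y \<in> Oo \<Longrightarrow> 2 * 2^k * y \<in> Ii (Suc k)"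
  using pow2_I[of y "Suc k"] by simp

lemma hensel:
  "cnt (Suc (Suc k)) (\<lambda>x. Bf x - 1 \<in> Ii (Suc (Suc (Suc k))))
     = q^2 * cnt (Suc k) (\<lambda>x. Bf x - 1 \<in> Ii (Suc (Suc k)))"
proof -
  let ?P = "\<lambda>x. Bf x - 1 \<in> Ii (Suc (Suc (Suc k)))"
  let ?P' = "\<lambda>x. Bf x - 1 \<in> Ii (Suc (Suc k))"
  have dec: "cnt (Suc k + 1) ?P = (\<Sum>p\<in>S3 (Rep (Suc k)). card {e \<in> S3 (Rep 1). ?P (cmb3 (Suc k) p e)})"
    by (rule cnt_decomp) (use inv_P1[of "Suc k" 1] in simp)
  have inner: "card {e \<in> S3 (Rep 1). ?P (cmb3 (Suc k) p e)} = (if ?P' p then q^2 else 0)"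
    if p: "p \<in> S3 (Rep (Suc k))" for p
  proof (cases "?P' p")
    case False
    have "\<not> ?P (cmb3 (Suc k) p e)" if e: "e \<in> S3 (Rep 1)" for e
    proof
      assume Pc: "?P (cmb3 (Suc k) p e)"
      obtain p0 p1 p2 where pe: "p = (p0,p1,p2)" by (cases p) auto
      obtain e0 e1 e2 where ee: "e = (e0,e1,e2)" by (cases e) auto
      have pO: "p0 \<in> Oo" "p1 \<in> Oo" "p2 \<in> Oo" using S3_O3[OF p] pe by auto
      have eO: "e0 \<in> Oo" "e1 \<in> Oo" "e2 \<in> Oo" using S3_O3[OF e] ee by auto
      have D: "Bf (cmb3 (Suc k) p e) - Bf p \<in> Ii (Suc (Suc k))"
        unfolding pe ee cmb3_simp by (rule B_diff1) (use pO eO pow2_I_Suc in simp_all)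
      have "Bf (cmb3 (Suc k) p e) - 1 \<in> Ii (Suc (Suc k))" using Pc I_mono[of "Suc (Suc k)" "Suc (Suc (Suc k))"] by simp
      then have "Bf p - 1 \<in> Ii (Suc (Suc k))" using cong_iff2[OF D] by blast
      then show False using False by simp
    qed
    then have E: "{e \<in> S3 (Rep 1). ?P (cmb3 (Suc k) p e)} = {}" by blast
    show ?thesis unfolding E using False by simp
  next
    case True
    show ?thesis
    proof (cases k)
      case 0
      have p1: "p \<in> S3 R" using p 0 Rep_1 by simp
      have B1: "Bf p - 1 \<in> Ii 2" using True 0 by (simp add: numeral_2_eq_2)
      have H: "card {e\<in>S3 R. Bf (cmb3 1 p e) - 1 \<in> Ii 3} = q^2" by (rule hens_1[OF p1 B1])
      have "card {e \<in> S3 (Rep 1). ?P (cmb3 (Suc k) p e)} = q^2"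
        using H 0 Rep_1 by (simp add: numeral_3_eq_3)
      then show ?thesis using True by simp
    next
      case (Suc k')
      have p1: "p \<in> S3 (Rep (Suc (Suc k')))" using p Suc by simp
      have B1: "Bf p - 1 \<in> Ii (Suc (Suc (Suc k')))" using True Suc by simp
      have "card {e\<in>S3 R. Bf (cmb3 (Suc (Suc k')) p e) - 1 \<in> Ii (Suc (Suc (Suc (Suc k'))))} = q^2"
        by (rule hens_big[OF p1 B1])
      then show ?thesis using True Suc Rep_1 by simp
    qed
  qed
  have "cnt (Suc (Suc k)) ?P = (\<Sum>p\<in>S3 (Rep (Suc k)). (if ?P' p then q^2 else 0))"
    using dec inner by simp
  also have "\<dots> = (\<Sum>p\<in>{p\<in>S3 (Rep (Suc k)). ?P' p}. q^2)"
    by (rule sum.inter_filter[symmetric]) (rule S3_Rep[THEN conjunct1])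
  also have "\<dots> = q^2 * cnt (Suc k) ?P'" unfolding cnt_def by simp
  finally show ?thesis .
qed

lemma K7:
  "cnt (Suc (Suc (Suc k))) (\<lambda>x. Bf x - 1 \<in> Ii (Suc (Suc (Suc k))))
     = q^2 * cnt (Suc (Suc k)) (\<lambda>x. Bf x - 1 \<in> Ii (Suc (Suc k)))"
proof -
  let ?P3 = "\<lambda>x. Bf x - 1 \<in> Ii (Suc (Suc (Suc k)))"
  let ?P2 = "\<lambda>x. Bf x - 1 \<in> Ii (Suc (Suc k))"
  have r1: "cnt (Suc (Suc k) + 1) ?P3 = q^(3*1) * cnt (Suc (Suc k)) ?P3"
    by (rule cnt_refine) (rule inv_P1)
  have r2: "cnt (Suc k + 1) ?P2 = q^(3*1) * cnt (Suc k) ?P2"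
    by (rule cnt_refine) (rule inv_P1)
  have h: "cnt (Suc (Suc k)) ?P3 = q^2 * cnt (Suc k) ?P2" by (rule hensel)
  show ?thesis using r1 r2 h by (simp add: algebra_simps)
qed

end


lemma quot_card:
  assumes eq: "equiv A r" and DA: "D \<subseteq> A"
    and ex: "\<And>x. x \<in> A \<Longrightarrow> \<exists>d\<in>D. (x,d) \<in> r"
    and un: "\<And>d d'. d \<in> D \<Longrightarrow> d' \<in> D \<Longrightarrow> (d,d') \<in> r \<Longrightarrow> d = d'"
    and SA: "S \<subseteq> A" and sat: "\<And>x y. x \<in> S \<Longrightarrow> (x,y) \<in> r \<Longrightarrow> y \<in> S"
  shows "card (S // r) = card (S \<inter> D)"
proof -
  have inj: "inj_on (\<lambda>d. r``{d}) (S \<inter> D)"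
  proof (rule inj_onI)
    fix d d' assume d: "d \<in> S \<inter> D" and d': "d' \<in> S \<inter> D" and e: "r``{d} = r``{d'}"
    have "(d',d') \<in> r" using d' DA eq unfolding equiv_def refl_on_def by blast
    then have "d' \<in> r``{d}" using e by blast
    then have "(d,d') \<in> r" by blast
    then show "d = d'" using un d d' by blast
  qed
  have img: "(\<lambda>d. r``{d}) ` (S \<inter> D) = S // r"
  proof
    show "(\<lambda>d. r``{d}) ` (S \<inter> D) \<subseteq> S // r" unfolding quotient_def by blast
    show "S // r \<subseteq> (\<lambda>d. r``{d}) ` (S \<inter> D)"
    proof
      fix C assume "C \<in> S // r"
      then obtain x where x: "x \<in> S" "C = r``{x}" unfolding quotient_def by blast
      obtain d where d: "d \<in> D" "(x,d) \<in> r" using ex x SA by blast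
      have "d \<in> S" using sat x d by blast
      moreover have "r``{x} = r``{d}" using equiv_class_eq[OF eq d(2)] .
      ultimately show "C \<in> (\<lambda>d. r``{d}) ` (S \<inter> D)" using x d by blast
    qed
  qed
  show ?thesis using card_image[OF inj] img by simp
qed

definition mkv :: "'a::zero \<Rightarrow> 'a \<Rightarrow> 'a \<Rightarrow> nat \<Rightarrow> 'a" where
  "mkv a b c = (\<lambda>i. if i = 0 then a else if i = 1 then b else if i = 2 then c else 0)"

lemma all3: "(\<forall>i<(3::nat). P i) = (P 0 \<and> P 1 \<and> P 2)"
proof
  assume h: "\<forall>i<(3::nat). P i"
  have "P 0" using h by (erule_tac allE[of _ 0]) simp
  moreover have "P 1" using h by (erule_tac allE[of _ 1]) simp
  moreover have "P 2" using h by (erule_tac allE[of _ 2]) simp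
  ultimately show "P 0 \<and> P 1 \<and> P 2" by blast
next
  assume h: "P 0 \<and> P 1 \<and> P 2"
  show "\<forall>i<(3::nat). P i"
  proof (intro allI impI)
    fix i :: nat assume "i < 3"
    then have "i = 0 \<or> i = 1 \<or> i = 2" by arith
    then show "P i" using h by blast
  qed
qed

context dyad begin

lemma vecs3: "x \<in> vecs val 3 \<longleftrightarrow> x 0 \<in> Oo \<and> x 1 \<in> Oo \<and> x 2 \<in> Oo \<and> (\<forall>i\<ge>3. x i = 0)"
proof -
  have "(\<forall>i<3. x i \<in> Oo) \<longleftrightarrow> x 0 \<in> Oo \<and> x 1 \<in> Oo \<and> x 2 \<in> Oo"
    by (rule all3)
  then show ?thesis unfolding vecs_def by auto
qed

lemma vcong3: "(x,y) \<in> vec_cong val 3 m \<longleftrightarrow> x \<in> vecs val 3 \<and> y \<in> vecs val 3 \<and>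
   x 0 - y 0 \<in> Ii m \<and> x 1 - y 1 \<in> Ii m \<and> x 2 - y 2 \<in> Ii m"
proof -
  have "(\<forall>i<3. x i - y i \<in> Ii m) \<longleftrightarrow> x 0 - y 0 \<in> Ii m \<and> x 1 - y 1 \<in> Ii m \<and> x 2 - y 2 \<in> Ii m"
    by (rule all3)
  then show ?thesis unfolding vec_cong_def by auto
qed

lemma vec_ext3: "x \<in> vecs val 3 \<Longrightarrow> y \<in> vecs val 3 \<Longrightarrow> x 0 = y 0 \<Longrightarrow> x 1 = y 1 \<Longrightarrow> x 2 = y 2 \<Longrightarrow> x = y"
proof
  fix i assume h: "x \<in> vecs val 3" "y \<in> vecs val 3" "x 0 = y 0" "x 1 = y 1" "x 2 = y 2"
  show "x i = y i"
  proof (cases "i < 3")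
    case True
    then have "i = 0 \<or> i = 1 \<or> i = 2" by auto
    then show ?thesis using h by auto
  next
    case False
    then show ?thesis using h by (simp add: vecs3)
  qed
qed

lemma mkv_vecs: "a \<in> Oo \<Longrightarrow> b \<in> Oo \<Longrightarrow> c \<in> Oo \<Longrightarrow> mkv a b c \<in> vecs val 3"
  unfolding vecs3 mkv_def by auto

lemma mkv_simps[simp]: "mkv a b c 0 = a" "mkv a b c 1 = b" "mkv a b c 2 = c"
  "mkv a b c (Suc 0) = b" "mkv a b c (Suc (Suc 0)) = c"
  by (simp_all add: mkv_def)

lemma equiv_vc: "equiv (vecs val 3) (vec_cong val 3 m)"
proof (rule equivI)
  show "refl_on (vecs val 3) (vec_cong val 3 m)"
    by (rule refl_onI) (auto simp: vcong3)
  show "vec_cong val 3 m \<subseteq> vecs val 3 \<times> vecs val 3" by (auto simp: vcong3)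
  show "sym (vec_cong val 3 m)" unfolding sym_def vcong3 using I_sym by blast
  show "trans (vec_cong val 3 m)" unfolding trans_def vcong3 using I_trans by blast
qed

lemma bridge:
  assumes P: "inv3 m P"
  shows "card ({x \<in> vecs val 3. P (x 0, x 1, x 2)} // vec_cong val 3 m) = cnt m P"
proof -
  let ?A = "vecs val 3" and ?r = "vec_cong val 3 m"
  let ?D = "{x \<in> vecs val 3. x 0 \<in> Rep m \<and> x 1 \<in> Rep m \<and> x 2 \<in> Rep m}"
  let ?S = "{x \<in> vecs val 3. P (x 0, x 1, x 2)}"
  have "card (?S // ?r) = card (?S \<inter> ?D)"
  proof (rule quot_card[OF equiv_vc])
    show "?D \<subseteq> ?A" by blast
    show "?S \<subseteq> ?A" by blast
    fix x assume x: "x \<in> ?A"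
    then have xO: "x 0 \<in> Oo" "x 1 \<in> Oo" "x 2 \<in> Oo" by (auto simp: vecs3)
    obtain a where a: "a \<in> Rep m" "x 0 - a \<in> Ii m" using crsD2[OF crs_Rep xO(1)] by blast
    obtain b where b: "b \<in> Rep m" "x 1 - b \<in> Ii m" using crsD2[OF crs_Rep xO(2)] by blast
    obtain c where c: "c \<in> Rep m" "x 2 - c \<in> Ii m" using crsD2[OF crs_Rep xO(3)] by blast
    have abcO: "a \<in> Oo" "b \<in> Oo" "c \<in> Oo" using a b c Rep_sub by auto
    have "mkv a b c \<in> ?D" using mkv_vecs[OF abcO] a b c by simp
    moreover have "(x, mkv a b c) \<in> ?r" using x mkv_vecs[OF abcO] a b c by (simp add: vcong3)
    ultimately show "\<exists>d\<in>?D. (x, d) \<in> ?r" by blast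
  next
    fix d d' assume d: "d \<in> ?D" and d': "d' \<in> ?D" and e: "(d, d') \<in> ?r"
    have "d 0 = d' 0" using crsD3[OF crs_Rep, of "d 0" m "d' 0"] d d' e by (simp add: vcong3)
    moreover have "d 1 = d' 1" using crsD3[OF crs_Rep, of "d 1" m "d' 1"] d d' e by (simp add: vcong3)
    moreover have "d 2 = d' 2" using crsD3[OF crs_Rep, of "d 2" m "d' 2"] d d' e by (simp add: vcong3)
    ultimately show "d = d'" using vec_ext3 d d' by blast
  next
    fix x y assume x: "x \<in> ?S" and e: "(x, y) \<in> ?r"
    have h: "x 0 \<in> Oo" "x 1 \<in> Oo" "x 2 \<in> Oo" "y 0 \<in> Oo" "y 1 \<in> Oo" "y 2 \<in> Oo"
      "x 0 - y 0 \<in> Ii m" "x 1 - y 1 \<in> Ii m" "x 2 - y 2 \<in> Ii m" using e by (auto simp: vcong3 vecs3)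
    have "P (x 0, x 1, x 2) = P (y 0, y 1, y 2)" using P[unfolded inv3_def, rule_format, OF h] .
    then show "y \<in> ?S" using x e by (auto simp: vcong3)
  qed
  also have "card (?S \<inter> ?D) = cnt m P"
  proof -
    have "bij_betw (\<lambda>x. (x 0, x 1, x 2)) (?S \<inter> ?D) {t \<in> S3 (Rep m). P t}"
    proof (rule bij_betwI')
      fix x y assume "x \<in> ?S \<inter> ?D" "y \<in> ?S \<inter> ?D"
      then show "((x 0, x 1, x 2) = (y 0, y 1, y 2)) = (x = y)" using vec_ext3 by auto
    next
      fix x assume "x \<in> ?S \<inter> ?D"
      then show "(x 0, x 1, x 2) \<in> {t \<in> S3 (Rep m). P t}" by auto
    next
      fix t assume t: "t \<in> {t \<in> S3 (Rep m). P t}"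
      obtain a b c where abc: "t = (a,b,c)" by (cases t) auto
      have abcO: "a \<in> Oo" "b \<in> Oo" "c \<in> Oo" using t abc Rep_sub by auto
      have "mkv a b c \<in> ?S \<inter> ?D" using mkv_vecs[OF abcO] t abc by simp
      moreover have "t = (mkv a b c 0, mkv a b c 1, mkv a b c 2)" using abc by simp
      ultimately show "\<exists>x\<in>?S \<inter> ?D. t = (x 0, x 1, x 2)" by blast
    qed
    then show ?thesis unfolding cnt_def by (rule bij_betw_same_card)
  qed
  finally show ?thesis .
qed

lemma bridge_all: "card (vecs val 3 // vec_cong val 3 m) = q^(3*m)"
proof -
  have "inv3 m (\<lambda>x. True)" unfolding inv3_def by simp
  then have "card ({x \<in> vecs val 3. True} // vec_cong val 3 m) = cnt m (\<lambda>x. True)" by (rule bridge)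
  then show ?thesis unfolding cnt_def using S3_Rep by simp
qed

end


context dyadB begin

definition F :: "'k \<Rightarrow> nat \<Rightarrow> nat" where
  "F t m = cnt m (\<lambda>x. Bf x - t^2 \<in> Ii m)"

lemma F1: "t \<in> Oo \<Longrightarrow> F t 1 = q^2"
  unfolding F_def by (rule K1) simp

lemma G2: "cnt (Suc (Suc 0)) (\<lambda>x. Bf x - 1 \<in> Ii (Suc (Suc 0))) = q^3 * (q+1)"
proof -
  have "cnt (1+1) (\<lambda>x. Bf x - 1 \<in> Ii 2) = q^(3*1) * cnt 1 (\<lambda>x. Bf x - 1 \<in> Ii 2)"
    by (rule cnt_refine) (rule inv_P12)
  then show ?thesis using K6 by (simp add: numeral_2_eq_2)
qed

lemma G_formula: "cnt (Suc (Suc l)) (\<lambda>x. Bf x - 1 \<in> Ii (Suc (Suc l))) = q^3 * (q+1) * q^(2*l)"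
proof (induction l)
  case 0 then show ?case using G2 by simp
next
  case (Suc l)
  have e: "q^(2*Suc l) = q^2 * q^(2*l)" by (simp add: power_add[symmetric])
  have "cnt (Suc (Suc (Suc l))) (\<lambda>x. Bf x - 1 \<in> Ii (Suc (Suc (Suc l))))
      = q^2 * cnt (Suc (Suc l)) (\<lambda>x. Bf x - 1 \<in> Ii (Suc (Suc l)))" by (rule K7)
  also have "\<dots> = q^2 * (q^3 * (q+1) * q^(2*l))" using Suc.IH by simp
  also have "\<dots> = q^3 * (q+1) * (q^2 * q^(2*l))" by (simp only: mult_ac)
  also have "\<dots> = q^3 * (q+1) * q^(2*Suc l)" by (simp only: e)
  finally show ?case .
qed

lemma F_unit: "unit t \<Longrightarrow> F t (Suc (Suc l)) = q^3 * (q+1) * q^(2*l)"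
  unfolding F_def using K5 G_formula by simp

lemma F_two2: assumes t': "t' \<in> Oo" shows "F (2*t') (Suc (Suc 0)) = q^3"
proof -
  have "(2*t')^2 = 4 * t'^2" by (simp add: power2_eq_square)
  then have "(2*t')^2 \<in> Ii 2" using four_I t' by simp
  then have "cnt 2 (\<lambda>x. Bf x - (2*t')^2 \<in> Ii 2) = q^3" by (rule K3)
  then show ?thesis unfolding F_def by (simp add: numeral_2_eq_2)
qed

lemma F_two3: assumes t': "t' \<in> Oo" shows "F (2*t') (Suc (Suc (Suc k))) = q^3 * F t' (Suc k)"
proof -
  have e: "(2*t')^2 = 4 * t'^2" by (simp add: power2_eq_square)
  show ?thesis unfolding F_def e using K4[of "t'^2" k] t' by simp
qed

end


definition RT :: "complex \<Rightarrow> complex \<Rightarrow> nat \<Rightarrow> complex" where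
  "RT Q w T = (1 / Q) * (1 + w / Q) / (1 - w ^ 2 / Q)
           + (1 / Q) * w ^ (2 * T + 1) * (1 / Q) ^ T * (1 - w ^ 2 / Q ^ 2)
               / ((1 - w) * (1 - w ^ 2 / Q))"

lemma RT_AC: "RT Q w T = (1 / Q) * (1 + w / Q) / (1 - w ^ 2 / Q)
   + ((1 / Q) * (1 - w ^ 2 / Q ^ 2) / ((1 - w) * (1 - w ^ 2 / Q))) * (w ^ (2 * T + 1) * (1 / Q) ^ T)"
  unfolding RT_def by (simp add: mult_ac)

lemma div_mul_cancel_gen: "(b::'a::field) \<noteq> 0 \<Longrightarrow> a / b * b = a"
  by (simp add: field_simps)

lemma frac_gen: assumes E: "(E::'a::field) \<noteq> 0" and D: "D \<noteq> 0" and h: "E + w*M = D"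
  shows "P/D + P*w*M/(E*D) = P/E"
proof -
  have "P/D + P*w*M/(E*D) = (P*E + P*w*M)/(E*D)" using E D by (simp add: field_simps)
  also have "P*E + P*w*M = P*D" unfolding h[symmetric] by (simp add: algebra_simps)
  also have "P*D/(E*D) = P/E" using D by simp
  finally show ?thesis .
qed

lemma A_rec: fixes Q w :: complex assumes Q: "Q \<noteq> 0" and D: "1 - w^2/Q \<noteq> 0"
  shows "(1 / Q) * (1 + w / Q) / (1 - w ^ 2 / Q) = 1/Q + w/Q^2 + (w^2/Q) * ((1 / Q) * (1 + w / Q) / (1 - w ^ 2 / Q))"
proof -
  define A where "A = (1 / Q) * (1 + w / Q) / (1 - w ^ 2 / Q)"
  have "A * (1 - w^2/Q) = (1 / Q) * (1 + w / Q)" unfolding A_def by (rule div_mul_cancel_gen) (rule D)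
  then have "A = (1 / Q) * (1 + w / Q) + (w^2/Q) * A" by (simp add: algebra_simps)
  also have "(1 / Q) * (1 + w / Q) = 1/Q + w/Q^2" using Q by (simp add: field_simps power2_eq_square)
  finally show ?thesis unfolding A_def .
qed

lemma RT_0: fixes Q w :: complex assumes Q: "Q \<noteq> 0" and E: "1 - w \<noteq> 0" and D: "1 - w^2/Q \<noteq> 0"
  shows "RT Q w 0 = (1/Q) * (1 + w/Q) / (1 - w)"
proof -
  have f: "1 - w^2/Q^2 = (1 + w/Q) * (1 - w/Q)" using Q by (simp add: field_simps power2_eq_square)
  have g: "(1 - w) + w * (1 - w/Q) = 1 - w^2/Q" using Q by (simp add: field_simps power2_eq_square)
  have "RT Q w 0 = ((1/Q) * (1 + w/Q)) / (1 - w^2/Q) + ((1/Q) * (1 + w/Q)) * w * (1 - w/Q) / ((1 - w) * (1 - w^2/Q))"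
    unfolding RT_def f by (simp add: mult_ac)
  also have "\<dots> = ((1/Q) * (1 + w/Q)) / (1 - w)" by (rule frac_gen[OF E D g])
  finally show ?thesis .
qed

lemma RT_Suc: fixes Q w :: complex assumes Q: "Q \<noteq> 0" and D: "1 - w^2/Q \<noteq> 0"
  shows "RT Q w (Suc T) = 1/Q + w/Q^2 + (w^2/Q) * RT Q w T"
proof -
  define A where "A = (1 / Q) * (1 + w / Q) / (1 - w ^ 2 / Q)"
  define C where "C = (1 / Q) * (1 - w ^ 2 / Q ^ 2) / ((1 - w) * (1 - w ^ 2 / Q))"
  have R: "RT Q w T' = A + C * (w ^ (2 * T' + 1) * (1 / Q) ^ T')" for T' unfolding RT_AC A_def C_def ..
  have Arec: "A = 1/Q + w/Q^2 + (w^2/Q) * A" unfolding A_def by (rule A_rec[OF Q D])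
  have p: "w ^ (2 * Suc T + 1) * (1 / Q) ^ Suc T = (w^2/Q) * (w ^ (2 * T + 1) * (1 / Q) ^ T)"
    by (simp add: power2_eq_square field_simps)
  show ?thesis unfolding R p using Arec by (simp add: algebra_simps)
qed



lemma ser_base:
  fixes q :: nat and z :: complex and x :: "nat \<Rightarrow> real"
  assumes q: "2 \<le> q" and z: "norm z < 1" and x0: "x 0 = 1 / real q"
    and xs: "\<And>l. x (Suc l) = (real q + 1) / real q ^ (l + 3)"
  shows "(\<lambda>l. z^l * complex_of_real (x l)) sums RT (of_real (real q)) (z / of_real (real q)) 0"
proof -
  define Q where "Q = complex_of_real (real q)"
  define w where "w = z / Q"
  have Qnz: "Q \<noteq> 0" using q by (simp add: Q_def)
  have nQ: "norm Q = real q" by (simp add: Q_def)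
  have nw: "norm w < 1"
  proof -
    have "norm w = norm z / real q" by (simp add: w_def norm_divide nQ)
    also have "\<dots> < 1" using z q by (simp add: divide_less_eq)
    finally show ?thesis .
  qed
  have E: "1 - w \<noteq> 0" using nw by auto
  have D: "1 - w^2/Q \<noteq> 0"
  proof
    assume "1 - w^2/Q = 0"
    then have "w^2/Q = 1" by simp
    then have "norm (w^2/Q) = 1" by simp
    moreover have "norm (w^2/Q) < 1"
    proof -
      have "norm (w^2/Q) = norm w ^ 2 / real q" by (simp add: norm_divide norm_power nQ)
      also have "\<dots> \<le> norm w ^ 2"
      proof -
        have "norm w^2 * 1 \<le> norm w^2 * real q" by (rule mult_left_mono) (use q in auto)
        then show ?thesis using q by (simp add: divide_le_eq)
      qed
      also have "\<dots> < 1" using nw by (simp add: power_less_one_iff)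
      finally show ?thesis .
    qed
    ultimately show False by simp
  qed
  define c where "c = z * (Q + 1) / Q^3"
  have g: "(\<lambda>l. c * w^l) sums (c * (1 / (1 - w)))" by (rule sums_mult) (rule geometric_sums[OF nw])
  have eqf: "(\<lambda>l. z^(Suc l) * complex_of_real (x (Suc l))) = (\<lambda>l. c * w^l)"
  proof
    fix l
    have X: "complex_of_real (x (Suc l)) = (Q + 1) / Q^(l+3)" unfolding xs Q_def by simp
    show "z^(Suc l) * complex_of_real (x (Suc l)) = c * w^l"
      unfolding X c_def w_def using Qnz by (simp add: power_divide power_add field_simps)
  qed
  have "(\<lambda>l. z^(Suc l) * complex_of_real (x (Suc l))) sums (c * (1 / (1 - w)))" unfolding eqf by (rule g)
  then have S: "(\<lambda>l. z^l * complex_of_real (x l)) sums (c * (1 / (1 - w)) + z^0 * complex_of_real (x 0))"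
    by (subst sums_Suc_iff[symmetric]) simp
  have "c * (1 / (1 - w)) + z^0 * complex_of_real (x 0) = (1/Q) * (1 + w/Q) / (1 - w)"
  proof -
    have z': "z = w * Q" unfolding w_def using Qnz by simp
    have x0': "complex_of_real (x 0) = 1 / Q" unfolding x0 Q_def by simp
    show ?thesis unfolding c_def z' x0' using Qnz E by (simp add: field_simps power3_eq_cube)
  qed
  also have "\<dots> = RT Q w 0" using RT_0[OF Qnz E D] by simp
  finally show ?thesis using S unfolding Q_def w_def by simp
qed

lemma ser_step:
  fixes q :: nat and z :: complex and x x' :: "nat \<Rightarrow> real"
  assumes q: "2 \<le> q" and z: "norm z < 1"
    and IH: "(\<lambda>l. z^l * complex_of_real (x' l)) sums RT (of_real (real q)) (z / of_real (real q)) T"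
    and x0: "x 0 = 1 / real q" and x1: "x 1 = 1 / real q ^ 3"
    and xs: "\<And>l. x (Suc (Suc l)) = x' l / real q ^ 3"
  shows "(\<lambda>l. z^l * complex_of_real (x l)) sums RT (of_real (real q)) (z / of_real (real q)) (Suc T)"
proof -
  define Q where "Q = complex_of_real (real q)"
  define w where "w = z / Q"
  have Qnz: "Q \<noteq> 0" using q by (simp add: Q_def)
  have nQ: "norm Q = real q" by (simp add: Q_def)
  have nw: "norm w < 1"
  proof -
    have "norm w = norm z / real q" by (simp add: w_def norm_divide nQ)
    also have "\<dots> < 1" using z q by (simp add: divide_less_eq)
    finally show ?thesis .
  qed
  have D: "1 - w^2/Q \<noteq> 0"
  proof
    assume "1 - w^2/Q = 0"
    then have "w^2/Q = 1" by simp
    then have "norm (w^2/Q) = 1" by simp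
    moreover have "norm (w^2/Q) < 1"
    proof -
      have "norm (w^2/Q) = norm w ^ 2 / real q" by (simp add: norm_divide norm_power nQ)
      also have "\<dots> \<le> norm w ^ 2"
      proof -
        have "norm w^2 * 1 \<le> norm w^2 * real q" by (rule mult_left_mono) (use q in auto)
        then show ?thesis using q by (simp add: divide_le_eq)
      qed
      also have "\<dots> < 1" using nw by (simp add: power_less_one_iff)
      finally show ?thesis .
    qed
    ultimately show False by simp
  qed
  define f where "f l = z^l * complex_of_real (x l)" for l
  define c where "c = z^2 / Q^3"
  have eqf: "(\<lambda>l. f (Suc (Suc l))) = (\<lambda>l. c * (z^l * complex_of_real (x' l)))"
  proof
    fix l
    have X: "complex_of_real (x (Suc (Suc l))) = complex_of_real (x' l) / Q^3" unfolding xs Q_def by simp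
    show "f (Suc (Suc l)) = c * (z^l * complex_of_real (x' l))"
      unfolding f_def X c_def using Qnz by (simp add: field_simps power2_eq_square)
  qed
  have "(\<lambda>l. f (Suc (Suc l))) sums (c * RT Q w T)" unfolding eqf
    by (rule sums_mult) (use IH in \<open>simp add: Q_def w_def\<close>)
  then have "(\<lambda>l. f (Suc l)) sums (c * RT Q w T + f (Suc 0))"
    using sums_Suc_iff[of "\<lambda>n. f (Suc n)" "c * RT Q w T"] by simp
  then have S: "f sums (c * RT Q w T + f (Suc 0) + f 0)"
    using sums_Suc_iff[of f "c * RT Q w T + f (Suc 0)"] by simp
  have "c * RT Q w T + f (Suc 0) + f 0 = 1/Q + w/Q^2 + (w^2/Q) * RT Q w T"
  proof -
    have z': "z = w * Q" unfolding w_def using Qnz by simp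
    have f0: "f 0 = 1/Q" unfolding f_def x0 Q_def by simp
    have f1: "f (Suc 0) = w/Q^2" unfolding f_def One_nat_def[symmetric] x1 Q_def w_def using q by (simp add: field_simps power2_eq_square power3_eq_cube)
    have cc: "c = w^2/Q" unfolding c_def z' using Qnz by (simp add: field_simps power2_eq_square power3_eq_cube)
    show ?thesis unfolding f0 f1 cc by (simp add: algebra_simps)
  qed
  also have "\<dots> = RT Q w (Suc T)" using RT_Suc[OF Qnz D] by simp
  finally show ?thesis using S unfolding f_def Q_def w_def by simp
qed



theorem proposition7p2:
  fixes val :: "'k::field \<Rightarrow> int" and q :: nat
    and a \<Delta> u v t :: 'k and T :: nat and \<beta> :: complex
  assumes "unram_dyadic_local_field val q"
    and "is_unit_v val u" and "is_unit_v val v" and "is_unit_v val \<Delta>"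
    and "a = 1 + 2 * u"
    and "quad_defect val a = two_pow_ideal val 1"
    and "quad_defect val \<Delta> = two_pow_ideal val 1"
    and "hilbert_symbol a \<Delta> = -1"
    and "- a * \<Delta> = 1 + 2 * v"
    and "t \<in> vring val" and "t \<noteq> 0" and "val t = int T"
    and "0 < Re \<beta>"
  shows
    "let B = (\<lambda>x::nat \<Rightarrow> 'k. x 0 ^ 2 - a * (x 1 ^ 2 - \<Delta> * x 2 ^ 2));
         Q = complex_of_real (real q);
         z = Q powr (- \<beta>);
         w = z / Q
     in (\<lambda>l. z ^ l * complex_of_real (X_l val 3 B (t ^ 2) l)) sums
          ((1 / Q) * (1 + w / Q) / (1 - w ^ 2 / Q)
           + (1 / Q) * w ^ (2 * T + 1) * (1 / Q) ^ T * (1 - w ^ 2 / Q ^ 2)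
               / ((1 - w) * (1 - w ^ 2 / Q)))"
proof -
  note A = assms
  interpret D: dyad val q by (rule dyad.intro) (rule A(1))
  have uU: "D.unit u" using A(2) unfolding is_unit_v_def D.unit_val by simp
  have vU: "D.unit v" using A(3) unfolding is_unit_v_def D.unit_val by simp
  have anz: "a \<noteq> 0" using D.unit_nz[OF D.unit_1plus2[OF D.unit_O[OF uU]]] A(5) by simp
  have aD: "a * \<Delta> = -(1 + 2 * v)"
  proof -
    have "a * \<Delta> = - (- a * \<Delta>)" by simp
    also have "\<dots> = -(1 + 2 * v)" using A(9) by (simp only:)
    finally show ?thesis .
  qed
  have aniso: "x0 = 0 \<and> x1 = 0 \<and> x2 = 0"
    if h: "x0^2 - (1+2 * u)*x1^2 - (1+2 * v)*x2^2 = 0" for x0 x1 x2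
  proof (rule ccontr)
    assume nz: "\<not> (x0 = 0 \<and> x1 = 0 \<and> x2 = 0)"
    have "x0^2 - a * x1^2 + (a * \<Delta>) * x2^2 = x0^2 - (1+2 * u)*x1^2 - (1+2 * v)*x2^2"
      unfolding aD unfolding A(5) by (simp add: algebra_simps)
    then have "x0^2 - a * x1^2 + (a * \<Delta>) * x2^2 = 0" using h by simp
    then have "a * (x0^2 - a * x1^2 + (a * \<Delta>) * x2^2) = 0" by simp
    then have e: "(a * x1)^2 = a * x0^2 + \<Delta> * (a * x2)^2" by (simp add: algebra_simps power2_eq_square)
    have "(x0, a * x2, a * x1) \<noteq> (0, 0, 0)" using nz anz by auto
    then have "\<exists>x y z. (x, y, z) \<noteq> (0, 0, 0) \<and> z ^ 2 = a * x ^ 2 + \<Delta> * y ^ 2" using e by blast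
    then have "hilbert_symbol a \<Delta> = 1" unfolding hilbert_symbol_def by simp
    then show False using A(8) by simp
  qed
  interpret E: dyadB val q u v
    by (rule dyadB.intro[OF D.dyad_axioms], rule dyadB_axioms.intro[OF uU vU aniso]) 
  define B where "B = (\<lambda>x::nat \<Rightarrow> 'k. x 0 ^ 2 - a * (x 1 ^ 2 - \<Delta> * x 2 ^ 2))"
  define Q where "Q = complex_of_real (real q)"
  define z where "z = Q powr (- \<beta>)"
  define w where "w = z / Q"
  have Bx: "B x = E.Bf (x 0, x 1, x 2)" for x
  proof -
    have "B x = x 0^2 - a * x 1^2 + (a * \<Delta>) * x 2^2" unfolding B_def by (simp add: algebra_simps)
    also have "\<dots> = E.Bf (x 0, x 1, x 2)" unfolding aD unfolding A(5) E.Bf_simp by (simp add: algebra_simps)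
    finally show ?thesis .
  qed
  define xs where "xs t l = real (E.F t (Suc l)) / real q ^ (3 * Suc l)" for t l
  have Xl: "X_l val 3 B (t^2) l = xs t l" for t l
  proof -
    have S: "{x \<in> vecs val 3. B x - t^2 \<in> two_pow_ideal val (l + 1)} =
             {x \<in> vecs val 3. (\<lambda>y. E.Bf y - t^2 \<in> two_pow_ideal val (Suc l)) (x 0, x 1, x 2)}"
      using Bx by simp
    have c1: "card ({x \<in> vecs val 3. (\<lambda>y. E.Bf y - t^2 \<in> two_pow_ideal val (Suc l)) (x 0, x 1, x 2)} // vec_cong val 3 (Suc l))
       = D.cnt (Suc l) (\<lambda>y. E.Bf y - t^2 \<in> two_pow_ideal val (Suc l))"
      by (rule D.bridge) (rule E.inv_P)
    have c2: "card (vecs val 3 // vec_cong val 3 (Suc l)) = q^(3 * Suc l)" by (rule D.bridge_all)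
    show ?thesis unfolding X_l_def coset_measure_def S xs_def E.F_def using c1 c2 by simp
  qed
  have q2: "2 \<le> q" by (rule D.q_ge2)
  have nz: "norm z < 1"
  proof -
    have "norm z = real q powr (- Re \<beta>)" unfolding z_def Q_def
      by (subst norm_powr_real_powr) auto
    also have "\<dots> < 1" by (rule powr_less_one) (use q2 A(13) in auto)
    finally show ?thesis .
  qed
  have main: "\<forall>t. t \<in> vring val \<longrightarrow> t \<noteq> 0 \<longrightarrow> val t = int T \<longrightarrow>
      (\<lambda>l. z^l * complex_of_real (xs t l)) sums RT (of_real (real q)) (z / of_real (real q)) T"
  proof (induction T)
    case 0
    show ?case
    proof (intro allI impI)
      fix t assume t: "t \<in> vring val" "t \<noteq> 0" "val t = int 0"
      have tu: "D.unit t" using t by (simp add: D.unit_val)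
      show "(\<lambda>l. z^l * complex_of_real (xs t l)) sums RT (of_real (real q)) (z / of_real (real q)) 0"
      proof (rule ser_base[OF q2 nz])
        show "xs t 0 = 1 / real q" unfolding xs_def using E.F1[OF t(1)] q2
          by (simp add: power3_eq_cube power2_eq_square)
        fix l
        have ex: "3 * Suc (Suc l) = (3 + 2*l) + (l+3)" by simp
        have e1: "real q ^ (3 * Suc (Suc l)) = (real q^3 * real q^(2*l)) * real q^(l+3)"
          unfolding ex power_add by simp
        have pos: "real q^3 * real q^(2*l) \<noteq> 0" using q2 by simp
        show "xs t (Suc l) = (real q + 1) / real q ^ (l + 3)"
          unfolding xs_def E.F_unit[OF tu] e1 using pos by (simp add: field_simps)
      qed
    qed
  next
    case (Suc T)
    show ?case
    proof (intro allI impI)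
      fix t assume t: "t \<in> vring val" "t \<noteq> 0" "val t = int (Suc T)"
      have "t \<in> two_pow_ideal val 1" using t by (simp add: D.memI)
      then obtain t' where t': "t' \<in> vring val" "t = 2^1 * t'" using D.I_elim by blast
      have t'nz: "t' \<noteq> 0" using t t' by auto
      have "val t = 1 + val t'" using t' t'nz D.vmult[of 2 t'] D.two_nz D.v2 by simp
      then have vt': "val t' = int T" using t by simp
      have IH: "(\<lambda>l. z^l * complex_of_real (xs t' l)) sums RT (of_real (real q)) (z / of_real (real q)) T"
        using Suc.IH t'(1) t'nz vt' by blast
      have t2: "t = 2 * t'" using t' by simp
      show "(\<lambda>l. z^l * complex_of_real (xs t l)) sums RT (of_real (real q)) (z / of_real (real q)) (Suc T)"
      proof (rule ser_step[OF q2 nz IH])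
        show "xs t 0 = 1 / real q" unfolding xs_def using E.F1[OF t(1)] q2
          by (simp add: power3_eq_cube power2_eq_square)
        show "xs t 1 = 1 / real q ^ 3" unfolding xs_def t2 using E.F_two2[OF t'(1)] q2
          by (simp add: field_simps)
        fix l
        show "xs t (Suc (Suc l)) = xs t' l / real q ^ 3"
          unfolding xs_def t2 using E.F_two3[OF t'(1), of l] q2
          by (simp add: field_simps power_add)
      qed
    qed
  qed
  have "(\<lambda>l. z^l * complex_of_real (xs t l)) sums RT Q w T"
    using main A(10,11,12) unfolding Q_def w_def by blast
  moreover have "(\<lambda>l. z^l * complex_of_real (X_l val 3 B (t^2) l)) = (\<lambda>l. z^l * complex_of_real (xs t l))"
    using Xl by simp
  ultimately show ?thesis unfolding Let_def B_def[symmetric] Q_def[symmetric] z_def[symmetric] w_def[symmetric]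
    unfolding RT_def by simp
qed


end
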